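(* (i) For every $r\in\mathbb N$ and non-negative integers $n_1,\dots,n_r,m_1,\dots,m_r$, with $n=\sum_jn_j$, $m=\sum_jm_j$, $$\lim_{N\to\infty}\Big(\Big\langle\prod_{j=1}^r(E^N_-)^{n_j}(E^N_+)^{m_j}\Big\rangle^N_\beta-\big\langle(E^N_-)^n(E^N_+)^m\big\rangle^N_\beta\Big)=0,$$ so the limits of the two expectations coincide. (ii) If $X^N$ are operators on $\mathbb C^{2^N}\otimes\mathbb C^{2^N}$ with $\lim_{N\to\infty}\langle (X^N)^\dagger X^N\rangle^N_\beta=\lim_{N\to\infty}\|X^N|\Omega^N_\beta\rangle\|^2=0$, then for all non-negative integers $n,m$, $\lim_{N\to\infty}\langle(E^N_-)^n(E^N_+)^mX^N\rangle^N_\beta=0$.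
   Context: Fix real $\epsilon$, $T_c>0$, $\beta>0$. For $N\in\mathbb N$, on $(\mathbb C^2)^{\otimes N}$ let $S^N_i=\frac12\sum_{k=1}^N\sigma^{(k)}_i$ ($\sigma^{(k)}_i$ Pauli matrices at site $k$), $S^N_\pm=S^N_x\pm iS^N_y$, $H^N=-2\epsilon S^N_z-\frac{2T_c}{N}S^N_+S^N_-$, $\rho^N_\beta=e^{-\beta H^N}/\mathrm{Tr}\,e^{-\beta H^N}=\sum_ar_a|e_a\rangle\langle e_a|$ for an orthonormal eigenbasis $\{|e_a\rangle\}$ of $H^N$ of joint eigenvectors of $(\vec S^N)^2,S^N_z$. Let $|\Omega^N_\beta\rangle=\sum_a\sqrt{r_a}|e_a\rangle\otimes|e_a\rangle$ and $\langle X\rangle^N_\beta=\langle\Omega^N_\beta|X|\Omega^N_\beta\rangle$. Let $\mathfrak c=\lim_N(N^{-2}\mathrm{Tr}[\rho^N_\beta S^N_+S^N_-])^{1/2}$, assumed $>0$, and $E^N_\pm=\frac1{\mathfrak cN}S^N_\pm\otimes\mathbb I$. *)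

theory Defs
  imports Complex_Main "Jordan_Normal_Form.Matrix" "Jordan_Normal_Form.Schur_Decomposition"
begin

definition kron :: "complex mat \<Rightarrow> complex mat \<Rightarrow> complex mat" where
  "kron A B = mat (dim_row A * dim_row B) (dim_col A * dim_col B)
     (\<lambda>(i,j). A $$ (i div dim_row B, j div dim_col B) * B $$ (i mod dim_row B, j mod dim_col B))"

definition vkron :: "complex vec \<Rightarrow> complex vec \<Rightarrow> complex vec" where
  "vkron v w = vec (dim_vec v * dim_vec w) (\<lambda>i. v $ (i div dim_vec w) * w $ (i mod dim_vec w))"

definition pauli_x :: "complex mat" where
  "pauli_x = mat_of_rows_list 2 [[0, 1], [1, 0]]"
definition pauli_y :: "complex mat" where
  "pauli_y = mat_of_rows_list 2 [[0, -\<i>], [\<i>, 0]]"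
definition pauli_z :: "complex mat" where
  "pauli_z = mat_of_rows_list 2 [[1, 0], [0, -1]]"

definition site_op :: "nat \<Rightarrow> nat \<Rightarrow> complex mat \<Rightarrow> complex mat" where
  "site_op N k A = kron (kron (1\<^sub>m (2^k)) A) (1\<^sub>m (2^(N - k - 1)))"

definition spin_op :: "nat \<Rightarrow> complex mat \<Rightarrow> complex mat" where
  "spin_op N A = mat (2^N) (2^N) (\<lambda>(i,j). (1/2) * (\<Sum>k<N. site_op N k A $$ (i,j)))"

definition Sx :: "nat \<Rightarrow> complex mat" where "Sx N = spin_op N pauli_x"
definition Sy :: "nat \<Rightarrow> complex mat" where "Sy N = spin_op N pauli_y"
definition Sz :: "nat \<Rightarrow> complex mat" where "Sz N = spin_op N pauli_z"
definition Splus :: "nat \<Rightarrow> complex mat" where "Splus N = Sx N + \<i> \<cdot>\<^sub>m Sy N"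
definition Sminus :: "nat \<Rightarrow> complex mat" where "Sminus N = Sx N - \<i> \<cdot>\<^sub>m Sy N"
definition Ssq :: "nat \<Rightarrow> complex mat" where
  "Ssq N = Sx N * Sx N + Sy N * Sy N + Sz N * Sz N"

definition ham :: "real \<Rightarrow> real \<Rightarrow> nat \<Rightarrow> complex mat" where
  "ham eps Tc N = (- complex_of_real (2 * eps)) \<cdot>\<^sub>m Sz N
      + (- complex_of_real (2 * Tc / real N)) \<cdot>\<^sub>m (Splus N * Sminus N)"

text \<open>Given an orthonormal eigenbasis e a (a < 2^N) of H^N with eigenvalues lam a,
  the Gibbs weights r_a = exp(-beta lam_a) / sum_b exp(-beta lam_b), i.e. the eigenvalues of
  e^{-beta H}/Tr e^{-beta H} on e_a.\<close>
definition gibbs_weight :: "real \<Rightarrow> nat \<Rightarrow> (nat \<Rightarrow> real) \<Rightarrow> nat \<Rightarrow> real" where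
  "gibbs_weight \<beta> N lam a = exp (- \<beta> * lam a) / (\<Sum>b<2^N. exp (- \<beta> * lam b))"

definition ket_bra :: "complex vec \<Rightarrow> complex mat" where
  "ket_bra v = mat (dim_vec v) (dim_vec v) (\<lambda>(i,j). v $ i * cnj (v $ j))"

definition gibbs_state :: "real \<Rightarrow> nat \<Rightarrow> (nat \<Rightarrow> real) \<Rightarrow> (nat \<Rightarrow> complex vec) \<Rightarrow> complex mat" where
  "gibbs_state \<beta> N lam e = mat (2^N) (2^N)
     (\<lambda>(i,j). \<Sum>a<2^N. complex_of_real (gibbs_weight \<beta> N lam a) * ket_bra (e a) $$ (i,j))"

definition purif :: "real \<Rightarrow> nat \<Rightarrow> (nat \<Rightarrow> real) \<Rightarrow> (nat \<Rightarrow> complex vec) \<Rightarrow> complex vec" where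
  "purif \<beta> N lam e = vec (4^N)
     (\<lambda>i. \<Sum>a<2^N. complex_of_real (sqrt (gibbs_weight \<beta> N lam a)) * vkron (e a) (e a) $ i)"

definition expect :: "complex vec \<Rightarrow> complex mat \<Rightarrow> complex" where
  "expect \<Omega> X = (X *\<^sub>v \<Omega>) \<bullet>c \<Omega>"

definition mtrace :: "complex mat \<Rightarrow> complex" where
  "mtrace A = (\<Sum>i<dim_row A. A $$ (i,i))"

definition Eplus :: "real \<Rightarrow> nat \<Rightarrow> complex mat" where
  "Eplus c N = complex_of_real (1 / (c * real N)) \<cdot>\<^sub>m kron (Splus N) (1\<^sub>m (2^N))"
definition Eminus :: "real \<Rightarrow> nat \<Rightarrow> complex mat" where
  "Eminus c N = complex_of_real (1 / (c * real N)) \<cdot>\<^sub>m kron (Sminus N) (1\<^sub>m (2^N))"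

text \<open>Ordered product prod_{j=1}^r (E_-)^{n_j} (E_+)^{m_j}, with the list [(n_1,m_1),...,(n_r,m_r)].\<close>
definition word_op :: "real \<Rightarrow> nat \<Rightarrow> (nat \<times> nat) list \<Rightarrow> complex mat" where
  "word_op c N ps = foldr (\<lambda>(n,m) M. (Eminus c N ^\<^sub>m n) * (Eplus c N ^\<^sub>m m) * M) ps (1\<^sub>m (4^N))"

end

theory Submission
  imports Defs "HOL-Analysis.L2_Norm"
begin


lemma sum_split_prod:
  "(\<Sum>t<n*m. f t) = (\<Sum>u<n. \<Sum>v<m. f (u*m+v)) " for f :: "nat \<Rightarrow> 'a::comm_monoid_add"
proof (induction n)
  case 0 then show ?case by simp
next
  case (Suc n)
  have "{..<Suc n * m} = {..<n*m} \<union> {n*m..<n*m+m}" by auto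
  then have "(\<Sum>t<Suc n*m. f t) = (\<Sum>t<n*m. f t) + (\<Sum>t\<in>{n*m..<n*m+m}. f t)"
    by (simp add: sum.union_disjoint ivl_disj_int)
  also have "(\<Sum>t\<in>{n*m..<n*m+m}. f t) = (\<Sum>v<m. f (n*m+v))"
    using sum.shift_bounds_nat_ivl[of f 0 "n*m" m] by (simp add: atLeast0LessThan add.commute)
  finally show ?case unfolding sum.lessThan_Suc Suc.IH .
qed

lemma index_kron [simp]:
  "i < dim_row A * dim_row B \<Longrightarrow> j < dim_col A * dim_col B \<Longrightarrow>
   kron A B $$ (i,j) = A $$ (i div dim_row B, j div dim_col B) * B $$ (i mod dim_row B, j mod dim_col B)"
  unfolding kron_def by (simp only: index_mat(1) prod.case)

lemma dim_kron [simp]: "dim_row (kron A B) = dim_row A * dim_row B" "dim_col (kron A B) = dim_col A * dim_col B"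
  unfolding kron_def by (simp_all only: dim_row_mat dim_col_mat)

lemma kron_carrier: "A \<in> carrier_mat a b \<Longrightarrow> B \<in> carrier_mat c d \<Longrightarrow> kron A B \<in> carrier_mat (a*c) (b*d)"
  unfolding carrier_mat_def by (simp only: mem_Collect_eq dim_kron)
lemma div_mod_lt:
  assumes "(i::nat) < a * b" shows "i div b < a" "i mod b < b"
proof -
  show "i div b < a" using assms less_mult_imp_div_less by blast
  have "b \<noteq> 0" using assms by (metis mult_0_right not_less0)
  then show "i mod b < b" by simp
qed

lemma kron_mult:
  assumes "dim_col A = dim_row C" "dim_col B = dim_row D"
  shows "kron A B * kron C D = kron (A*C) (B*D)"
proof (rule eq_matI)
  fix i j assume i: "i < dim_row (kron (A*C) (B*D))" and j: "j < dim_col (kron (A*C) (B*D))"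
  have i': "i < dim_row A * dim_row B" and j': "j < dim_col C * dim_col D" using i j by auto
  note ii = div_mod_lt[OF i'] and jj = div_mod_lt[OF j']
  have "(kron A B * kron C D) $$ (i,j) = (\<Sum>t<dim_col A * dim_col B.
      (A $$ (i div dim_row B, t div dim_col B) * B $$ (i mod dim_row B, t mod dim_col B)) *
      (C $$ (t div dim_row D, j div dim_col D) * D $$ (t mod dim_row D, j mod dim_col D)))"
  proof -
    have "(kron A B * kron C D) $$ (i,j) = row (kron A B) i \<bullet> col (kron C D) j"
      using i j by simp
    also have "\<dots> = (\<Sum>t<dim_col A * dim_col B. kron A B $$ (i,t) * kron C D $$ (t,j))"
      unfolding scalar_prod_def using i' j' assms by (auto simp: lessThan_atLeast0 intro!: sum.cong)
    also have "\<dots> = (\<Sum>t<dim_col A * dim_col B.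
      (A $$ (i div dim_row B, t div dim_col B) * B $$ (i mod dim_row B, t mod dim_col B)) *
      (C $$ (t div dim_row D, j div dim_col D) * D $$ (t mod dim_row D, j mod dim_col D)))"
      apply (rule sum.cong[OF refl])
      using i' j' assms by (subst index_kron; simp)+
    finally show ?thesis .
  qed
  also have "\<dots> = (\<Sum>u<dim_col A. \<Sum>v<dim_col B.
      (A $$ (i div dim_row B, u) * B $$ (i mod dim_row B, v)) *
      (C $$ (u, j div dim_col D) * D $$ (v, j mod dim_col D)))"
    unfolding sum_split_prod assms(2)[symmetric]
    by (intro sum.cong refl) simp
  also have "\<dots> = (\<Sum>u<dim_col A. A $$ (i div dim_row B, u) * C $$ (u, j div dim_col D)) *
      (\<Sum>v<dim_col B. B $$ (i mod dim_row B, v) * D $$ (v, j mod dim_col D))"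
    by (simp add: sum_product algebra_simps)
  also have "\<dots> = kron (A*C) (B*D) $$ (i,j)"
    using i' j' ii jj assms by (simp add: scalar_prod_def lessThan_atLeast0)
  finally show "(kron A B * kron C D) $$ (i,j) = kron (A*C) (B*D) $$ (i,j)" .
qed auto

lemma mod_mult_div_nat:
  fixes i b c :: nat
  shows "i mod (b*c) div c = i div c mod b" "i mod (b*c) mod c = i mod c"
proof -
  have e: "i mod (c*b) = c * (i div c mod b) + i mod c" by (rule mod_mult2_eq)
  show "i mod (b*c) div c = i div c mod b"
  proof (cases "c = 0")
    case False then show ?thesis using e by (simp add: mult.commute)
  qed simp
  show "i mod (b*c) mod c = i mod c"
    by (simp add: mult.commute mod_mod_cancel)
qed

lemma kron_assoc: "kron (kron A B) C = kron A (kron B C)"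
proof (rule eq_matI)
  fix i j assume i: "i < dim_row (kron A (kron B C))" and j: "j < dim_col (kron A (kron B C))"
  have i1: "i < (dim_row A * dim_row B) * dim_row C" and j1: "j < (dim_col A * dim_col B) * dim_col C"
    using i j by (auto simp: mult.assoc)
  have i2: "i < dim_row A * (dim_row B * dim_row C)" and j2: "j < dim_col A * (dim_col B * dim_col C)"
    using i j by auto
  note a1 = div_mod_lt[OF i1] and b1 = div_mod_lt[OF j1] and a2 = div_mod_lt[OF i2] and b2 = div_mod_lt[OF j2]
  have L: "kron (kron A B) C $$ (i,j) = (A $$ (i div dim_row C div dim_row B, j div dim_col C div dim_col B)
      * B $$ (i div dim_row C mod dim_row B, j div dim_col C mod dim_col B))
      * C $$ (i mod dim_row C, j mod dim_col C)"
    using index_kron[of i "kron A B" C j] index_kron[of "i div dim_row C" A B "j div dim_col C"] i1 j1 a1 b1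
    by simp
  have R: "kron A (kron B C) $$ (i,j) = A $$ (i div (dim_row B * dim_row C), j div (dim_col B * dim_col C))
      * (B $$ (i mod (dim_row B * dim_row C) div dim_row C, j mod (dim_col B * dim_col C) div dim_col C)
      * C $$ (i mod (dim_row B * dim_row C) mod dim_row C, j mod (dim_col B * dim_col C) mod dim_col C))"
    using index_kron[of i A "kron B C" j] index_kron[of "i mod (dim_row B * dim_row C)" B C "j mod (dim_col B * dim_col C)"] i2 j2 a2 b2
    by simp
  show "kron (kron A B) C $$ (i,j) = kron A (kron B C) $$ (i,j)"
  proof -
    have "i div (dim_row B * dim_row C) = i div dim_row C div dim_row B"
      "j div (dim_col B * dim_col C) = j div dim_col C div dim_col B"
      by (metis div_mult2_eq mult.commute)+
    then show ?thesis unfolding L R mod_mult_div_nat by simp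
  qed
qed (auto simp: mult.assoc)

lemma kron_one: "kron (1\<^sub>m a) (1\<^sub>m b) = (1\<^sub>m (a*b) :: complex mat)"
proof (rule eq_matI)
  fix i j assume i: "i < dim_row (1\<^sub>m (a*b) :: complex mat)" and j: "j < dim_col (1\<^sub>m (a*b) :: complex mat)"
  have i1: "i < a*b" and j1: "j < a*b" using i j by auto
  note a1 = div_mod_lt[OF i1] and b1 = div_mod_lt[OF j1]
  have "(i div b = j div b \<and> i mod b = j mod b) = (i = j)"
    by (metis div_mult_mod_eq)
  then show "kron (1\<^sub>m a) (1\<^sub>m b) $$ (i,j) = (1\<^sub>m (a*b) :: complex mat) $$ (i,j)"
    using a1 b1 i1 j1 by auto
qed auto

lemma adjoint_dim [simp]: "dim_row (mat_adjoint A) = dim_col A" "dim_col (mat_adjoint A) = dim_row A"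
  unfolding mat_adjoint_def by auto

lemma adjoint_index [simp]: "i < dim_col A \<Longrightarrow> j < dim_row A \<Longrightarrow> mat_adjoint A $$ (i,j) = cnj (A $$ (j,i))"
  unfolding mat_adjoint_def by (simp add: mat_of_rows_index)

lemma kron_adjoint: "mat_adjoint (kron A B) = kron (mat_adjoint A) (mat_adjoint B)"
proof (rule eq_matI)
  fix i j assume i: "i < dim_row (kron (mat_adjoint A) (mat_adjoint B))" and j: "j < dim_col (kron (mat_adjoint A) (mat_adjoint B))"
  have i1: "i < dim_col A * dim_col B" and j1: "j < dim_row A * dim_row B" using i j by auto
  note a1 = div_mod_lt[OF i1] and b1 = div_mod_lt[OF j1]
  show "mat_adjoint (kron A B) $$ (i,j) = kron (mat_adjoint A) (mat_adjoint B) $$ (i,j)"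
    using a1 b1 i1 j1 by simp
qed auto

lemma kron_add_left: "A \<in> carrier_mat n m \<Longrightarrow> B \<in> carrier_mat n m \<Longrightarrow> kron (A + B) C = kron A C + kron B C"
  by (rule eq_matI) (auto simp: div_mod_lt algebra_simps)

lemma kron_minus_left: "A \<in> carrier_mat n m \<Longrightarrow> B \<in> carrier_mat n m \<Longrightarrow> kron (A - B) C = kron A C - kron B C"
  by (rule eq_matI) (auto simp: div_mod_lt algebra_simps)

lemma kron_smult_left: "kron (a \<cdot>\<^sub>m A) C = a \<cdot>\<^sub>m kron A C"
  by (rule eq_matI) (auto simp: div_mod_lt algebra_simps)

definition vn :: "complex vec \<Rightarrow> real" where
  "vn v = L2_set (\<lambda>i. cmod (v $ i)) {..<dim_vec v}"

lemma vn_nonneg [simp]: "0 \<le> vn v" unfolding vn_def by simp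

lemma cinner_self: "v \<bullet>c v = complex_of_real ((vn v)^2)"
proof -
  have "v \<bullet>c v = (\<Sum>i<dim_vec v. v $ i * cnj (v $ i))"
    by (simp add: scalar_prod_def lessThan_atLeast0)
  also have "\<dots> = (\<Sum>i<dim_vec v. complex_of_real ((cmod (v $ i))^2))"
    by (intro sum.cong refl) (simp add: complex_mult_cnj cmod_power2)
  also have "\<dots> = complex_of_real ((vn v)^2)"
    unfolding vn_def L2_set_def by (simp add: sum_nonneg)
  finally show ?thesis .
qed

lemma vn_add: assumes "dim_vec w = dim_vec v" shows "vn (v + w) \<le> vn v + vn w"
proof -
  have "vn (v + w) = L2_set (\<lambda>i. cmod (v $ i + w $ i)) {..<dim_vec v}"
    unfolding vn_def using assms by (intro L2_set_cong) auto
  also have "\<dots> \<le> L2_set (\<lambda>i. cmod (v $ i) + cmod (w $ i)) {..<dim_vec v}"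
    by (rule L2_set_mono) (auto simp: norm_triangle_ineq)
  also have "\<dots> \<le> vn v + vn w"
    using L2_set_triangle_ineq[of "\<lambda>i. cmod (v $ i)" "\<lambda>i. cmod (w $ i)"] assms unfolding vn_def by simp
  finally show ?thesis .
qed

lemma vn_smult: "vn (a \<cdot>\<^sub>v v) = cmod a * vn v"
  unfolding vn_def by (subst L2_set_right_distrib) (auto intro!: L2_set_cong simp: norm_mult)

lemma vn_uminus: "vn (- v) = vn v"
  unfolding vn_def by (auto intro!: L2_set_cong)

lemma vn_minus: assumes "dim_vec w = dim_vec v" shows "vn (v - w) \<le> vn v + vn w"
proof -
  have "v - w = v + (- w)" using assms by auto
  then show ?thesis using vn_add[of "- w" v] assms by (simp add: vn_uminus)
qed

lemma vn_cs: assumes "dim_vec w = dim_vec v" shows "cmod (v \<bullet>c w) \<le> vn v * vn w"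
proof -
  have "v \<bullet>c w = (\<Sum>i<dim_vec v. v $ i * cnj (w $ i))"
    using assms by (simp add: scalar_prod_def lessThan_atLeast0)
  then have "cmod (v \<bullet>c w) \<le> (\<Sum>i<dim_vec v. \<bar>cmod (v $ i)\<bar> * \<bar>cmod (w $ i)\<bar>)"
    by (auto intro!: order_trans[OF norm_sum] simp: norm_mult)
  also have "\<dots> \<le> vn v * vn w" unfolding vn_def using assms L2_set_mult_ineq by metis
  finally show ?thesis .
qed

lemma adjoint_inner:
  fixes M :: "complex mat"
  assumes M: "M \<in> carrier_mat n m" and x: "x \<in> carrier_vec n" and w: "w \<in> carrier_vec m"
  shows "(mat_adjoint M *\<^sub>v x) \<bullet>c w = x \<bullet>c (M *\<^sub>v w)"
proof -
  have "(mat_adjoint M *\<^sub>v x) \<bullet>c w = (\<Sum>j<m. (\<Sum>i<n. cnj (M $$ (i,j)) * x $ i) * cnj (w $ j))"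
    using M x w by (auto simp: scalar_prod_def lessThan_atLeast0 intro!: sum.cong)
  also have "\<dots> = (\<Sum>i<n. x $ i * cnj (\<Sum>j<m. M $$ (i,j) * w $ j))"
  proof -
    have "(\<Sum>j<m. (\<Sum>i<n. cnj (M $$ (i,j)) * x $ i) * cnj (w $ j))
        = (\<Sum>j<m. \<Sum>i<n. x $ i * (cnj (M $$ (i,j)) * cnj (w $ j)))"
      unfolding sum_distrib_right by (simp add: mult_ac)
    also have "\<dots> = (\<Sum>i<n. \<Sum>j<m. x $ i * (cnj (M $$ (i,j)) * cnj (w $ j)))"
      by (rule sum.swap)
    also have "\<dots> = (\<Sum>i<n. x $ i * cnj (\<Sum>j<m. M $$ (i,j) * w $ j))"
      by (simp add: sum_distrib_left)
    finally show ?thesis .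
  qed
  also have "\<dots> = x \<bullet>c (M *\<^sub>v w)"
    using M x w by (auto simp: scalar_prod_def lessThan_atLeast0 intro!: sum.cong)
  finally show ?thesis .
qed

definition opb :: "nat \<Rightarrow> complex mat \<Rightarrow> real \<Rightarrow> bool" where
  "opb d M K \<longleftrightarrow> M \<in> carrier_mat d d \<and> 0 \<le> K \<and> (\<forall>v\<in>carrier_vec d. vn (M *\<^sub>v v) \<le> K * vn v)"

lemma opbD: "opb d M K \<Longrightarrow> M \<in> carrier_mat d d" "opb d M K \<Longrightarrow> 0 \<le> K"
  "opb d M K \<Longrightarrow> v \<in> carrier_vec d \<Longrightarrow> vn (M *\<^sub>v v) \<le> K * vn v"
  unfolding opb_def by auto

lemma opb_mono: assumes "opb d M K" "K \<le> L" shows "opb d M L"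
  unfolding opb_def
proof (intro conjI ballI)
  show "M \<in> carrier_mat d d" using assms opbD by blast
  show "0 \<le> L" using assms opbD(2)[OF assms(1)] by linarith
  fix v :: "complex vec" assume "v \<in> carrier_vec d"
  then show "vn (M *\<^sub>v v) \<le> L * vn v"
    using assms opbD(3)[OF assms(1)] mult_right_mono[of K L "vn v"] by force
qed

lemma opb_mult: assumes "opb d A K" "opb d B L" shows "opb d (A * B) (K * L)"
  unfolding opb_def
proof (intro conjI ballI)
  have A: "A \<in> carrier_mat d d" and B: "B \<in> carrier_mat d d" using assms by (simp_all add: opbD)
  show "A * B \<in> carrier_mat d d" using A B by simp
  show "0 \<le> K * L" using assms opbD by simp
  fix v :: "complex vec" assume v: "v \<in> carrier_vec d"
  have "(A * B) *\<^sub>v v = A *\<^sub>v (B *\<^sub>v v)" using A B v by (simp add: assoc_mult_mat_vec)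
  also have "vn \<dots> \<le> K * vn (B *\<^sub>v v)" using assms(1) B v by (simp add: opbD)
  also have "\<dots> \<le> K * (L * vn v)" using assms(1,2) B v opbD[of d A K] opbD(3)[of d B L v] by (simp add: mult_left_mono)
  finally show "vn ((A * B) *\<^sub>v v) \<le> K * L * vn v" by (simp add: mult.assoc)
qed

lemma opb_add: assumes "opb d A K" "opb d B L" shows "opb d (A + B) (K + L)"
  unfolding opb_def
proof (intro conjI ballI)
  have A: "A \<in> carrier_mat d d" and B: "B \<in> carrier_mat d d" using assms by (simp_all add: opbD)
  show "A + B \<in> carrier_mat d d" using A B by simp
  show "0 \<le> K + L" using assms opbD by simp
  fix v :: "complex vec" assume v: "v \<in> carrier_vec d"
  have "(A + B) *\<^sub>v v = A *\<^sub>v v + B *\<^sub>v v" using A B v by (simp add: add_mult_distrib_mat_vec)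
  also have "vn \<dots> \<le> vn (A *\<^sub>v v) + vn (B *\<^sub>v v)" using A B v by (intro vn_add) auto
  also have "\<dots> \<le> K * vn v + L * vn v" using assms v by (intro add_mono opbD)
  finally show "vn ((A + B) *\<^sub>v v) \<le> (K + L) * vn v" by (simp add: algebra_simps)
qed

lemma opb_minus: assumes "opb d A K" "opb d B L" shows "opb d (A - B) (K + L)"
  unfolding opb_def
proof (intro conjI ballI)
  have A: "A \<in> carrier_mat d d" and B: "B \<in> carrier_mat d d" using assms by (simp_all add: opbD)
  show "A - B \<in> carrier_mat d d" using B by (rule minus_carrier_mat)
  show "0 \<le> K + L" using assms opbD by simp
  fix v :: "complex vec" assume v: "v \<in> carrier_vec d"
  have "(A - B) *\<^sub>v v = A *\<^sub>v v - B *\<^sub>v v" using A B v by (simp add: minus_mult_distrib_mat_vec)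
  also have "vn \<dots> \<le> vn (A *\<^sub>v v) + vn (B *\<^sub>v v)" using A B v by (intro vn_minus) auto
  also have "\<dots> \<le> K * vn v + L * vn v" using assms v by (intro add_mono opbD)
  finally show "vn ((A - B) *\<^sub>v v) \<le> (K + L) * vn v" by (simp add: algebra_simps)
qed

lemma smult_mat_mult_vec: "A \<in> carrier_mat n m \<Longrightarrow> v \<in> carrier_vec m \<Longrightarrow> (a \<cdot>\<^sub>m A) *\<^sub>v v = a \<cdot>\<^sub>v (A *\<^sub>v (v::complex vec))"
  by (rule eq_vecI) (auto simp: scalar_prod_def sum_distrib_left mult.assoc)

lemma opb_smult: assumes "opb d A K" shows "opb d (a \<cdot>\<^sub>m A) (cmod a * K)"
  unfolding opb_def
proof (intro conjI ballI)
  have A: "A \<in> carrier_mat d d" using assms by (simp_all add: opbD)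
  show "a \<cdot>\<^sub>m A \<in> carrier_mat d d" using A by simp
  show "0 \<le> cmod a * K" using assms opbD by simp
  fix v :: "complex vec" assume v: "v \<in> carrier_vec d"
  have "(a \<cdot>\<^sub>m A) *\<^sub>v v = a \<cdot>\<^sub>v (A *\<^sub>v v)" using A v by (simp add: smult_mat_mult_vec)
  then have "vn ((a \<cdot>\<^sub>m A) *\<^sub>v v) = cmod a * vn (A *\<^sub>v v)" by (simp add: vn_smult)
  also have "\<dots> \<le> cmod a * (K * vn v)" using assms v opbD(3)[of d A K v] by (simp add: mult_left_mono)
  finally show "vn ((a \<cdot>\<^sub>m A) *\<^sub>v v) \<le> cmod a * K * vn v" by (simp add: mult.assoc)
qed

lemma opb_one: "opb d (1\<^sub>m d) 1"
  unfolding opb_def by auto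

lemma opb_pow: assumes "opb d A K" shows "opb d (A ^\<^sub>m n) (K ^ n)"
proof (induction n)
  case 0 then show ?case using opbD(1)[OF assms] by (simp add: opb_one)
next
  case (Suc n)
  then show ?case using opb_mult[OF Suc assms] by (simp add: mult.commute)
qed

lemma unitary_opb:
  assumes M: "M \<in> carrier_mat d d" and U: "mat_adjoint M * M = 1\<^sub>m d"
  shows "opb d M 1"
  unfolding opb_def
proof (intro conjI ballI)
  fix v :: "complex vec" assume v: "v \<in> carrier_vec d"
  have Mv: "M *\<^sub>v v \<in> carrier_vec d" using M v by auto
  have "mat_adjoint M *\<^sub>v (M *\<^sub>v v) = (mat_adjoint M * M) *\<^sub>v v"
    using M v by (subst assoc_mult_mat_vec[of _ d d _ d]) (auto intro!: carrier_matI)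
  also have "\<dots> = v" using U v by simp
  finally have e: "mat_adjoint M *\<^sub>v (M *\<^sub>v v) = v" .
  have "(M *\<^sub>v v) \<bullet>c (M *\<^sub>v v) = v \<bullet>c v"
    using adjoint_inner[OF M Mv v] e by simp
  then have "complex_of_real ((vn (M *\<^sub>v v))^2) = complex_of_real ((vn v)^2)" by (simp only: cinner_self)
  then have "(vn (M *\<^sub>v v))^2 = (vn v)^2" by (simp only: of_real_eq_iff)
  then have "vn (M *\<^sub>v v) = vn v" by (simp add: power2_eq_iff_nonneg)
  then show "vn (M *\<^sub>v v) \<le> 1 * vn v" by simp
qed (use M in auto)

lemma mult_carrier_sq: "A \<in> carrier_mat d d \<Longrightarrow> B \<in> carrier_mat d d \<Longrightarrow> (A * B :: complex mat) \<in> carrier_mat d d"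
  by (rule mult_carrier_mat)

lemma tele: "X \<in> carrier_mat n m \<Longrightarrow> Y \<in> carrier_mat n m \<Longrightarrow> Z \<in> carrier_mat n m \<Longrightarrow>
  X - Z = (X - Y) + (Y - (Z :: complex mat))"
  by (rule eq_matI) auto

lemma pow_mat_add: "A \<in> carrier_mat d d \<Longrightarrow> A ^\<^sub>m (m + n) = A ^\<^sub>m m * A ^\<^sub>m (n::nat)"
proof (induction n)
  case 0 then show ?case by simp
next
  case (Suc n)
  then show ?case by (simp add: assoc_mult_mat[of _ d d _ d _ d] mult_carrier_sq)
qed

lemma opb_diff_self: assumes "X \<in> carrier_mat d d" shows "opb d (X - X) 0"
  unfolding opb_def
proof (intro conjI ballI)
  fix v :: "complex vec" assume v: "v \<in> carrier_vec d"
  have "X - X = 0\<^sub>m d d" using assms by simp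
  moreover have "vn (0\<^sub>m d d *\<^sub>v v) = 0" unfolding vn_def
    by (rule L2_set_0') (use v in \<open>auto simp: scalar_prod_def\<close>)
  ultimately show "vn ((X - X) *\<^sub>v v) \<le> 0 * vn v" by simp
qed (use assms in auto)



lemma id1:
  fixes X Y Z :: "complex mat"
  assumes X: "X \<in> carrier_mat d d" and Y: "Y \<in> carrier_mat d d" and Z: "Z \<in> carrier_mat d d"
  shows "X * (Y * Z) - (Y * Z) * X = (X * Y - Y * X) * Z + Y * (X * Z - Z * X)"
proof -
  have XY: "X * Y \<in> carrier_mat d d" "Y * X \<in> carrier_mat d d" "X * Z \<in> carrier_mat d d" "Z * X \<in> carrier_mat d d"
     "Y * Z \<in> carrier_mat d d" using X Y Z by auto
  have "(X * Y - Y * X) * Z + Y * (X * Z - Z * X) = (X * Y * Z - Y * X * Z) + (Y * (X * Z) - Y * (Z * X))"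
    using minus_mult_distrib_mat[OF XY(1,2) Z] mult_minus_distrib_mat[OF Y XY(3,4)] by simp
  also have "\<dots> = (X * (Y * Z) - Y * (X * Z)) + (Y * (X * Z) - (Y * Z) * X)"
    using assoc_mult_mat[OF X Y Z] assoc_mult_mat[OF Y X Z] assoc_mult_mat[OF Y Z X] by simp
  also have "\<dots> = X * (Y * Z) - (Y * Z) * X"
    using tele[of "X * (Y * Z)" d d "Y * (X * Z)" "(Y * Z) * X"] X Y Z by (metis mult_carrier_sq)
  finally show ?thesis by simp
qed

lemma id2:
  fixes X Y Z :: "complex mat"
  assumes X: "X \<in> carrier_mat d d" and Y: "Y \<in> carrier_mat d d" and Z: "Z \<in> carrier_mat d d"
  shows "(Y * X) * Z - Z * (Y * X) = Y * (X * Z - Z * X) + (Y * Z - Z * Y) * X"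
proof -
  have "Y * (X * Z - Z * X) + (Y * Z - Z * Y) * X = (Y * (X * Z) - Y * (Z * X)) + (Y * (Z * X) - Z * (Y * X))"
    using X Y Z by (simp add: minus_mult_distrib_mat[of _ d d _ _ d] mult_minus_distrib_mat[of _ d d _ d] assoc_mult_mat[of _ d d _ d _ d] mult_carrier_sq)
  also have "\<dots> = Y * (X * Z) - Z * (Y * X)"
    using X Y Z by (intro tele[symmetric, of _ d d]) (auto simp: mult_carrier_sq)
  finally show ?thesis using X Y Z by (simp add: assoc_mult_mat[of _ d d _ d _ d])
qed

lemma id3:
  fixes P Q R S W :: "complex mat"
  assumes P: "P \<in> carrier_mat d d" and Q: "Q \<in> carrier_mat d d" and R: "R \<in> carrier_mat d d"
    and S: "S \<in> carrier_mat d d" and W: "W \<in> carrier_mat d d"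
  shows "P * Q * W - (P * R) * (Q * S) = (P * Q) * (W - R * S) + P * (Q * R - R * Q) * S"
proof -
  have "(P * Q) * (W - R * S) + P * (Q * R - R * Q) * S =
     (P * (Q * W) - P * (Q * (R * S))) + (P * (Q * (R * S)) - P * (R * (Q * S)))"
    using P Q R S W by (simp add: minus_mult_distrib_mat[of _ d d _ _ d] mult_minus_distrib_mat[of _ d d _ d] assoc_mult_mat[of _ d d _ d _ d] mult_carrier_sq)
  also have "\<dots> = P * (Q * W) - P * (R * (Q * S))"
    using P Q R S W by (intro tele[symmetric, of _ d d]) (auto simp: mult_carrier_sq)
  finally show ?thesis using P Q R S W by (simp add: assoc_mult_mat[of _ d d _ d _ d] mult_carrier_sq)
qed
locale reord =
  fixes d :: nat and A B :: "complex mat" and K \<delta> :: real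
  assumes A: "opb d A K" and B: "opb d B K" and K1: "1 \<le> K" and C: "opb d (B * A - A * B) \<delta>"
begin

lemma Ac: "A \<in> carrier_mat d d" and Bc: "B \<in> carrier_mat d d" and \<delta>0: "0 \<le> \<delta>"
  using A B C opbD by auto

lemma comm1: "opb d (B * A ^\<^sub>m n - A ^\<^sub>m n * B) (real n * K ^ n * \<delta>)"
proof (induction n)
  case 0
  have "B * A ^\<^sub>m 0 - A ^\<^sub>m 0 * B = B - B" using Ac Bc by simp
  then show ?case using opb_diff_self[OF Bc] by simp
next
  case (Suc n)
  have An: "A ^\<^sub>m n \<in> carrier_mat d d" using Ac by simp
  have e: "B * A ^\<^sub>m Suc n - A ^\<^sub>m Suc n * B = (B * A ^\<^sub>m n - A ^\<^sub>m n * B) * A + A ^\<^sub>m n * (B * A - A * B)"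
    using id1[OF Bc An Ac] by simp
  have "opb d ((B * A ^\<^sub>m n - A ^\<^sub>m n * B) * A + A ^\<^sub>m n * (B * A - A * B))
     (real n * K ^ n * \<delta> * K + K ^ n * \<delta>)"
    by (rule opb_add[OF opb_mult[OF Suc A] opb_mult[OF opb_pow[OF A] C]])
  moreover have "real n * K ^ n * \<delta> * K + K ^ n * \<delta> \<le> real (Suc n) * K ^ Suc n * \<delta>"
  proof -
    have "K ^ n \<le> K ^ Suc n" using K1 by (simp add: power_increasing)
    then have "K ^ n * \<delta> \<le> K ^ Suc n * \<delta>" using \<delta>0 by (simp add: mult_right_mono)
    then show ?thesis by (simp add: algebra_simps)
  qed
  ultimately show ?case unfolding e by (rule opb_mono)
qed

lemma comm2: "opb d (B ^\<^sub>m m * A ^\<^sub>m n - A ^\<^sub>m n * B ^\<^sub>m m) (real m * real n * K ^ (m + n) * \<delta>)"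
proof (induction m)
  case 0
  have "B ^\<^sub>m 0 * A ^\<^sub>m n - A ^\<^sub>m n * B ^\<^sub>m 0 = A ^\<^sub>m n - A ^\<^sub>m n" using Ac Bc by simp
  then show ?case using opb_diff_self[of "A ^\<^sub>m n" d] Ac by simp
next
  case (Suc m)
  have An: "A ^\<^sub>m n \<in> carrier_mat d d" and Bm: "B ^\<^sub>m m \<in> carrier_mat d d" using Ac Bc by simp_all
  have e: "B ^\<^sub>m Suc m * A ^\<^sub>m n - A ^\<^sub>m n * B ^\<^sub>m Suc m =
     B ^\<^sub>m m * (B * A ^\<^sub>m n - A ^\<^sub>m n * B) + (B ^\<^sub>m m * A ^\<^sub>m n - A ^\<^sub>m n * B ^\<^sub>m m) * B"
    using id2[OF Bc Bm An] by simp
  have "opb d (B ^\<^sub>m m * (B * A ^\<^sub>m n - A ^\<^sub>m n * B) + (B ^\<^sub>m m * A ^\<^sub>m n - A ^\<^sub>m n * B ^\<^sub>m m) * B)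
     (K ^ m * (real n * K ^ n * \<delta>) + real m * real n * K ^ (m + n) * \<delta> * K)"
    by (rule opb_add[OF opb_mult[OF opb_pow[OF B] comm1] opb_mult[OF Suc B]])
  moreover have "K ^ m * (real n * K ^ n * \<delta>) + real m * real n * K ^ (m + n) * \<delta> * K
      \<le> real (Suc m) * real n * K ^ (Suc m + n) * \<delta>"
  proof -
    have "K ^ (m + n) \<le> K ^ (Suc m + n)" using K1 by (simp add: power_increasing)
    then have "real n * K ^ (m + n) * \<delta> \<le> real n * K ^ (Suc m + n) * \<delta>" using \<delta>0
      by (simp add: mult_right_mono mult_left_mono)
    then show ?thesis by (simp add: algebra_simps power_add)
  qed
  ultimately show ?case unfolding e by (rule opb_mono)
qed

end

definition wd :: "complex mat \<Rightarrow> complex mat \<Rightarrow> nat \<Rightarrow> (nat \<times> nat) list \<Rightarrow> complex mat" where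
  "wd A B d ps = foldr (\<lambda>(n,m) M. (A ^\<^sub>m n) * (B ^\<^sub>m m) * M) ps (1\<^sub>m d)"

fun Cw :: "real \<Rightarrow> (nat \<times> nat) list \<Rightarrow> real" where
  "Cw K [] = 0"
| "Cw K ((n,m) # ps) = K ^ (n + m) * Cw K ps
     + real m * real (sum_list (map fst ps)) * K ^ (n + (m + sum_list (map fst ps)) + sum_list (map snd ps))"

context reord begin

lemma wd_carrier: "wd A B d ps \<in> carrier_mat d d"
proof (induction ps)
  case (Cons p ps)
  then show ?case using Ac Bc by (cases p) (auto simp: wd_def intro!: mult_carrier_sq)
qed (simp add: wd_def)

lemma reorder:
  "opb d (wd A B d ps - A ^\<^sub>m sum_list (map fst ps) * B ^\<^sub>m sum_list (map snd ps)) (Cw K ps * \<delta>)"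
proof (induction ps)
  case Nil
  have "wd A B d [] - A ^\<^sub>m 0 * B ^\<^sub>m 0 = 1\<^sub>m d - 1\<^sub>m d" using Ac Bc by (simp add: wd_def)
  then show ?case using opb_diff_self[of "1\<^sub>m d" d] by simp
next
  case (Cons p ps)
  obtain n m where p: "p = (n,m)" by force
  define n' where "n' = sum_list (map fst ps)"
  define m' where "m' = sum_list (map snd ps)"
  define W where "W = wd A B d ps"
  have W: "W \<in> carrier_mat d d" unfolding W_def by (rule wd_carrier)
  have wdc: "wd A B d (p # ps) = A ^\<^sub>m n * B ^\<^sub>m m * W" unfolding W_def p by (simp add: wd_def)
  have An: "\<And>k. A ^\<^sub>m k \<in> carrier_mat d d" and Bm: "\<And>k. B ^\<^sub>m k \<in> carrier_mat d d" using Ac Bc by simp_all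
  have tgt: "A ^\<^sub>m sum_list (map fst (p # ps)) * B ^\<^sub>m sum_list (map snd (p # ps)) =
     (A ^\<^sub>m n * A ^\<^sub>m n') * (B ^\<^sub>m m * B ^\<^sub>m m')"
    unfolding p n'_def m'_def by (simp add: pow_mat_add[OF Ac] pow_mat_add[OF Bc])
  have e: "wd A B d (p # ps) - A ^\<^sub>m sum_list (map fst (p # ps)) * B ^\<^sub>m sum_list (map snd (p # ps))
    = (A ^\<^sub>m n * B ^\<^sub>m m) * (W - A ^\<^sub>m n' * B ^\<^sub>m m') + A ^\<^sub>m n * (B ^\<^sub>m m * A ^\<^sub>m n' - A ^\<^sub>m n' * B ^\<^sub>m m) * B ^\<^sub>m m'"
    unfolding wdc tgt by (rule id3[OF An Bm An Bm W])
  have IH: "opb d (W - A ^\<^sub>m n' * B ^\<^sub>m m') (Cw K ps * \<delta>)" using Cons unfolding W_def n'_def m'_def .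
  have "opb d ((A ^\<^sub>m n * B ^\<^sub>m m) * (W - A ^\<^sub>m n' * B ^\<^sub>m m') + A ^\<^sub>m n * (B ^\<^sub>m m * A ^\<^sub>m n' - A ^\<^sub>m n' * B ^\<^sub>m m) * B ^\<^sub>m m')
     (K ^ n * K ^ m * (Cw K ps * \<delta>) + K ^ n * (real m * real n' * K ^ (m + n') * \<delta>) * K ^ m')"
    by (rule opb_add[OF opb_mult[OF opb_mult[OF opb_pow[OF A] opb_pow[OF B]] IH] opb_mult[OF opb_mult[OF opb_pow[OF A] comm2] opb_pow[OF B]]])
  moreover have "K ^ n * K ^ m * (Cw K ps * \<delta>) + K ^ n * (real m * real n' * K ^ (m + n') * \<delta>) * K ^ m'
     = Cw K (p # ps) * \<delta>"
    unfolding p n'_def m'_def by (simp add: algebra_simps power_add)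
  ultimately show ?case unfolding e by simp
qed

end




definition msum :: "nat \<Rightarrow> nat \<Rightarrow> (nat \<Rightarrow> complex mat) \<Rightarrow> complex mat" where
  "msum d N F = mat d d (\<lambda>(i,j). \<Sum>k<N. F k $$ (i,j))"

lemma msum_carrier [simp]: "msum d N F \<in> carrier_mat d d"
  unfolding msum_def by simp

lemma msum_dim [simp]: "dim_row (msum d N F) = d" "dim_col (msum d N F) = d"
  unfolding msum_def by simp_all

lemma msum_index [simp]: "i < d \<Longrightarrow> j < d \<Longrightarrow> msum d N F $$ (i,j) = (\<Sum>k<N. F k $$ (i,j))"
  unfolding msum_def by simp

lemma opb_zero: "opb d (0\<^sub>m d d) 0"
  unfolding opb_def
proof (intro conjI ballI)
  fix v :: "complex vec" assume v: "v \<in> carrier_vec d"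
  have "vn (0\<^sub>m d d *\<^sub>v v) = 0" unfolding vn_def
    by (rule L2_set_0') (use v in \<open>auto simp: scalar_prod_def\<close>)
  then show "vn (0\<^sub>m d d *\<^sub>v v) \<le> 0 * vn v" by simp
qed auto

lemma msum_Suc: assumes "F N \<in> carrier_mat d d" shows "msum d (Suc N) F = msum d N F + F N"
  by (rule eq_matI) (use assms in auto)

lemma opb_msum: assumes "\<And>k. k < N \<Longrightarrow> opb d (F k) c" "0 \<le> c" shows "opb d (msum d N F) (real N * c)"
  using assms(1)
proof (induction N)
  case 0
  have "msum d 0 F = 0\<^sub>m d d" by (rule eq_matI) auto
  then show ?case using opb_zero by simp
next
  case (Suc N)
  have F: "opb d (F N) c" using Suc.prems by simp
  have "opb d (msum d N F + F N) (real N * c + c)"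
    by (rule opb_add[OF Suc.IH F]) (use Suc.prems in simp)
  then show ?case using msum_Suc[of F N d, OF opbD(1)[OF F]] by (simp add: algebra_simps)
qed

lemma sum_single:
  assumes "finite A" "k \<in> A" "\<And>l. l \<in> A \<Longrightarrow> l \<noteq> k \<Longrightarrow> f l = 0"
  shows "sum f A = f k"
proof -
  have "sum f A = f k + sum f (A - {k})" using assms by (simp add: sum.remove)
  also have "sum f (A - {k}) = 0" using assms by (intro sum.neutral) auto
  finally show ?thesis by simp
qed

lemma msum_comm:
  assumes F: "\<And>k. k < N \<Longrightarrow> F k \<in> carrier_mat d d" and G: "\<And>k. k < N \<Longrightarrow> G k \<in> carrier_mat d d"
    and c: "\<And>k l. k < N \<Longrightarrow> l < N \<Longrightarrow> k \<noteq> l \<Longrightarrow> F k * G l = G l * F k"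
  shows "msum d N F * msum d N G - msum d N G * msum d N F = msum d N (\<lambda>k. F k * G k - G k * F k)"
proof (rule eq_matI)
  fix i j assume i: "i < dim_row (msum d N (\<lambda>k. F k * G k - G k * F k))"
    and j: "j < dim_col (msum d N (\<lambda>k. F k * G k - G k * F k))"
  then have i: "i < d" and j: "j < d" by (simp_all add: msum_def)
  have pr: "\<And>H L :: nat \<Rightarrow> complex mat. (\<And>k. k < N \<Longrightarrow> H k \<in> carrier_mat d d) \<Longrightarrow> (\<And>k. k < N \<Longrightarrow> L k \<in> carrier_mat d d) \<Longrightarrow>
     (msum d N H * msum d N L) $$ (i,j) = (\<Sum>k<N. \<Sum>l<N. (H k * L l) $$ (i,j))"
  proof -
    fix H L :: "nat \<Rightarrow> complex mat" assume H: "\<And>k. k < N \<Longrightarrow> H k \<in> carrier_mat d d" and L: "\<And>k. k < N \<Longrightarrow> L k \<in> carrier_mat d d"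
    have "(msum d N H * msum d N L) $$ (i,j) = (\<Sum>t<d. (\<Sum>k<N. H k $$ (i,t)) * (\<Sum>l<N. L l $$ (t,j)))"
      using i j by (simp add: scalar_prod_def lessThan_atLeast0)
    also have "\<dots> = (\<Sum>t<d. \<Sum>k<N. \<Sum>l<N. H k $$ (i,t) * L l $$ (t,j))"
      by (simp add: sum_product)
    also have "\<dots> = (\<Sum>k<N. \<Sum>t<d. \<Sum>l<N. H k $$ (i,t) * L l $$ (t,j))"
      by (rule sum.swap)
    also have "\<dots> = (\<Sum>k<N. \<Sum>l<N. \<Sum>t<d. H k $$ (i,t) * L l $$ (t,j))"
      by (intro sum.cong refl sum.swap)
    also have "\<dots> = (\<Sum>k<N. \<Sum>l<N. (H k * L l) $$ (i,j))"
    proof (intro sum.cong refl)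
      fix k l assume k: "k \<in> {..<N}" and l: "l \<in> {..<N}"
      have Hk: "H k \<in> carrier_mat d d" and Ll: "L l \<in> carrier_mat d d" using H L k l by auto
      show "(\<Sum>t<d. H k $$ (i,t) * L l $$ (t,j)) = (H k * L l) $$ (i,j)"
        using i j Hk Ll by (simp add: scalar_prod_def lessThan_atLeast0)
    qed
    finally show "(msum d N H * msum d N L) $$ (i,j) = (\<Sum>k<N. \<Sum>l<N. (H k * L l) $$ (i,j))" .
  qed
  have "(msum d N F * msum d N G - msum d N G * msum d N F) $$ (i,j)
     = (msum d N F * msum d N G) $$ (i,j) - (msum d N G * msum d N F) $$ (i,j)"
    using i j by simp
  also have "\<dots> = (\<Sum>k<N. \<Sum>l<N. (F k * G l) $$ (i,j)) - (\<Sum>l<N. \<Sum>k<N. (G l * F k) $$ (i,j))"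
    using pr[OF F G] pr[OF G F] by simp
  also have "(\<Sum>l<N. \<Sum>k<N. (G l * F k) $$ (i,j)) = (\<Sum>k<N. \<Sum>l<N. (G l * F k) $$ (i,j))"
    by (rule sum.swap)
  also have "(\<Sum>k<N. \<Sum>l<N. (F k * G l) $$ (i,j)) - (\<Sum>k<N. \<Sum>l<N. (G l * F k) $$ (i,j))
     = (\<Sum>k<N. \<Sum>l<N. (F k * G l) $$ (i,j) - (G l * F k) $$ (i,j))"
    by (simp add: sum_subtractf)
  also have "\<dots> = (\<Sum>k<N. (F k * G k) $$ (i,j) - (G k * F k) $$ (i,j))"
  proof (intro sum.cong refl)
    fix k assume k: "k \<in> {..<N}"
    show "(\<Sum>l<N. (F k * G l) $$ (i,j) - (G l * F k) $$ (i,j)) = (F k * G k) $$ (i,j) - (G k * F k) $$ (i,j)"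
      by (rule sum_single[where f = "\<lambda>l. (F k * G l) $$ (i,j) - (G l * F k) $$ (i,j)"]) (use k c in auto)
  qed
  also have "\<dots> = msum d N (\<lambda>k. F k * G k - G k * F k) $$ (i,j)"
  proof -
    have "\<And>k. k < N \<Longrightarrow> (F k * G k) $$ (i,j) - (G k * F k) $$ (i,j) = (F k * G k - G k * F k) $$ (i,j)"
    proof -
      fix k assume k: "k < N"
      have Fk: "F k \<in> carrier_mat d d" and Gk: "G k \<in> carrier_mat d d" using F G k by auto
      show "(F k * G k) $$ (i,j) - (G k * F k) $$ (i,j) = (F k * G k - G k * F k) $$ (i,j)"
        using i j Fk Gk by simp
    qed
    then show ?thesis using i j by (auto intro!: sum.cong)
  qed
  finally show "(msum d N F * msum d N G - msum d N G * msum d N F) $$ (i,j) = msum d N (\<lambda>k. F k * G k - G k * F k) $$ (i,j)" .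
qed (auto simp: msum_def)

lemma smult_smult_m: "(a::complex) \<cdot>\<^sub>m (b \<cdot>\<^sub>m A) = (a * b) \<cdot>\<^sub>m A"
  by (rule eq_matI) auto

lemma scal_id:
  fixes s :: real and a b c e :: "nat \<Rightarrow> complex"
  shows "(\<Sum>t<d. (of_real s * (a t + \<i> * b t)) * (of_real s * (c t - \<i> * e t)))
       - (\<Sum>t<d. (of_real s * (a t - \<i> * b t)) * (of_real s * (c t + \<i> * e t)))
     = of_real (s^2) * (- 2 * \<i>) * ((\<Sum>t<d. a t * e t) - (\<Sum>t<d. b t * c t))"
proof -
  have "\<And>t. (of_real s * (a t + \<i> * b t)) * (of_real s * (c t - \<i> * e t))
       - (of_real s * (a t - \<i> * b t)) * (of_real s * (c t + \<i> * e t))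
     = of_real (s^2) * (- 2 * \<i>) * (a t * e t - b t * c t)"
    by (simp add: algebra_simps power2_eq_square)
  then show ?thesis by (simp add: sum_subtractf[symmetric] sum_distrib_left)
qed

locale spins =
  fixes d N :: nat and P Q :: "nat \<Rightarrow> complex mat"
  assumes P: "\<And>k. k < N \<Longrightarrow> opb d (P k) 1" and Q: "\<And>k. k < N \<Longrightarrow> opb d (Q k) 1"
    and PQ: "\<And>k l. k < N \<Longrightarrow> l < N \<Longrightarrow> k \<noteq> l \<Longrightarrow> P k * Q l = Q l * P k"
begin

definition "X = (1/2 :: complex) \<cdot>\<^sub>m msum d N P"
definition "Y = (1/2 :: complex) \<cdot>\<^sub>m msum d N Q"

lemma Xc: "X \<in> carrier_mat d d" and Yc: "Y \<in> carrier_mat d d"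
  unfolding X_def Y_def by simp_all

lemma opbX: "opb d X (real N / 2)"
proof -
  have "opb d X (cmod (1/2 :: complex) * (real N * 1))"
    unfolding X_def by (rule opb_smult[OF opb_msum]) (use P in auto)
  then show ?thesis by simp
qed

lemma opbY: "opb d Y (real N / 2)"
proof -
  have "opb d Y (cmod (1/2 :: complex) * (real N * 1))"
    unfolding Y_def by (rule opb_smult[OF opb_msum]) (use Q in auto)
  then show ?thesis by simp
qed

lemma XY: "X * Y - Y * X = (1/4 :: complex) \<cdot>\<^sub>m msum d N (\<lambda>k. P k * Q k - Q k * P k)"
proof -
  have Pc: "\<And>k. k < N \<Longrightarrow> P k \<in> carrier_mat d d" and Qc: "\<And>k. k < N \<Longrightarrow> Q k \<in> carrier_mat d d"
    using P Q opbD(1) by blast+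
  have e1: "X * Y = (1/4 :: complex) \<cdot>\<^sub>m (msum d N P * msum d N Q)"
    unfolding X_def Y_def
    by (simp add: mult_smult_assoc_mat[of _ d d _ d] mult_smult_distrib[of _ d d _ d] smult_smult_m)
  have e2: "Y * X = (1/4 :: complex) \<cdot>\<^sub>m (msum d N Q * msum d N P)"
    unfolding X_def Y_def
    by (simp add: mult_smult_assoc_mat[of _ d d _ d] mult_smult_distrib[of _ d d _ d] smult_smult_m)
  have "X * Y - Y * X = (1/4 :: complex) \<cdot>\<^sub>m (msum d N P * msum d N Q - msum d N Q * msum d N P)"
    unfolding e1 e2 by (rule eq_matI) (auto simp: algebra_simps)
  also have "\<dots> = (1/4 :: complex) \<cdot>\<^sub>m msum d N (\<lambda>k. P k * Q k - Q k * P k)"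
    using msum_comm[OF Pc Qc PQ] by simp
  finally show ?thesis .
qed

lemma opbXY: "opb d (X * Y - Y * X) (real N / 2)"
proof -
  have "\<And>k. k < N \<Longrightarrow> opb d (P k * Q k - Q k * P k) (1 * 1 + 1 * 1)"
    using P Q by (intro opb_minus opb_mult) auto
  then have "opb d (msum d N (\<lambda>k. P k * Q k - Q k * P k)) (real N * 2)"
    by (intro opb_msum) auto
  then have "opb d ((1/4 :: complex) \<cdot>\<^sub>m msum d N (\<lambda>k. P k * Q k - Q k * P k)) (cmod (1/4 :: complex) * (real N * 2))"
    by (rule opb_smult)
  then show ?thesis unfolding XY by simp
qed

definition "Ep s = complex_of_real s \<cdot>\<^sub>m (X + \<i> \<cdot>\<^sub>m Y)"
definition "Em s = complex_of_real s \<cdot>\<^sub>m (X - \<i> \<cdot>\<^sub>m Y)"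

lemma opbEp: "0 \<le> s \<Longrightarrow> opb d (Ep s) (s * real N)"
proof -
  assume s: "0 \<le> s"
  have "opb d (Ep s) (cmod (complex_of_real s) * (real N / 2 + cmod \<i> * (real N / 2)))"
    unfolding Ep_def by (rule opb_smult[OF opb_add[OF opbX opb_smult[OF opbY]]])
  then show ?thesis using s by simp
qed

lemma opbEm: "0 \<le> s \<Longrightarrow> opb d (Em s) (s * real N)"
proof -
  assume s: "0 \<le> s"
  have "opb d (Em s) (cmod (complex_of_real s) * (real N / 2 + cmod \<i> * (real N / 2)))"
    unfolding Em_def by (rule opb_smult[OF opb_minus[OF opbX opb_smult[OF opbY]]])
  then show ?thesis using s by simp
qed

lemma EpEm: "Ep s * Em s - Em s * Ep s = (of_real (s^2) * (- 2 * \<i>)) \<cdot>\<^sub>m (X * Y - Y * X)"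
proof (rule eq_matI)
  fix i j assume i: "i < dim_row ((of_real (s^2) * (- 2 * \<i>)) \<cdot>\<^sub>m (X * Y - Y * X))"
    and j: "j < dim_col ((of_real (s^2) * (- 2 * \<i>)) \<cdot>\<^sub>m (X * Y - Y * X))"
  have i: "i < d" and j: "j < d" using i j Xc Yc by auto
  have ep: "\<And>t. t < d \<Longrightarrow> Ep s $$ (i,t) = of_real s * (X $$ (i,t) + \<i> * Y $$ (i,t))"
   and em: "\<And>t. t < d \<Longrightarrow> Em s $$ (t,j) = of_real s * (X $$ (t,j) - \<i> * Y $$ (t,j))"
   and ep2: "\<And>t. t < d \<Longrightarrow> Ep s $$ (t,j) = of_real s * (X $$ (t,j) + \<i> * Y $$ (t,j))"
   and em2: "\<And>t. t < d \<Longrightarrow> Em s $$ (i,t) = of_real s * (X $$ (i,t) - \<i> * Y $$ (i,t))"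
    using i j Xc Yc by (auto simp: Ep_def Em_def)
  have "(Ep s * Em s - Em s * Ep s) $$ (i,j) = (Ep s * Em s) $$ (i,j) - (Em s * Ep s) $$ (i,j)"
    using i j Xc Yc by (simp add: Ep_def Em_def)
  also have "\<dots> = (\<Sum>t<d. (of_real s * (X $$ (i,t) + \<i> * Y $$ (i,t))) * (of_real s * (X $$ (t,j) - \<i> * Y $$ (t,j))))
       - (\<Sum>t<d. (of_real s * (X $$ (i,t) - \<i> * Y $$ (i,t))) * (of_real s * (X $$ (t,j) + \<i> * Y $$ (t,j))))"
    using i j Xc Yc ep em ep2 em2 by (simp add: Ep_def Em_def scalar_prod_def lessThan_atLeast0)
  also have "\<dots> = of_real (s^2) * (- 2 * \<i>) * ((\<Sum>t<d. X $$ (i,t) * Y $$ (t,j)) - (\<Sum>t<d. Y $$ (i,t) * X $$ (t,j)))"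
    by (rule scal_id)
  also have "\<dots> = ((of_real (s^2) * (- 2 * \<i>)) \<cdot>\<^sub>m (X * Y - Y * X)) $$ (i,j)"
    using i j Xc Yc by (simp add: scalar_prod_def lessThan_atLeast0)
  finally show "(Ep s * Em s - Em s * Ep s) $$ (i,j) = ((of_real (s^2) * (- 2 * \<i>)) \<cdot>\<^sub>m (X * Y - Y * X)) $$ (i,j)" .
qed (use Xc Yc in \<open>auto simp: Ep_def Em_def\<close>)

lemma opb_comm: "opb d (Ep s * Em s - Em s * Ep s) (s^2 * real N)"
proof -
  have "opb d ((of_real (s^2) * (- 2 * \<i>)) \<cdot>\<^sub>m (X * Y - Y * X)) (cmod (of_real (s^2) * (- 2 * \<i>)) * (real N / 2))"
    by (rule opb_smult[OF opbXY])
  moreover have "cmod (of_real (s^2) * (- 2 * \<i>) :: complex) = 2 * s^2"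
    by (simp add: norm_mult norm_power)
  ultimately show ?thesis unfolding EpEm by simp
qed

end




lemma less2: "(i::nat) < 2 \<Longrightarrow> i = 0 \<or> i = 1" by auto

lemma pauli_x_carrier: "pauli_x \<in> carrier_mat 2 2"
  unfolding pauli_x_def mat_of_rows_list_def by (rule carrier_matI) (simp_all add: numeral_2_eq_2)
lemma pauli_y_carrier: "pauli_y \<in> carrier_mat 2 2"
  unfolding pauli_y_def mat_of_rows_list_def by (rule carrier_matI) (simp_all add: numeral_2_eq_2)

lemma pauli_x_idx: "pauli_x $$ (0,0) = 0" "pauli_x $$ (0,Suc 0) = 1" "pauli_x $$ (Suc 0,0) = 1" "pauli_x $$ (Suc 0,Suc 0) = 0"
  unfolding pauli_x_def mat_of_rows_list_def by simp_all
lemma pauli_y_idx: "pauli_y $$ (0,0) = 0" "pauli_y $$ (0,Suc 0) = -\<i>" "pauli_y $$ (Suc 0,0) = \<i>" "pauli_y $$ (Suc 0,Suc 0) = 0"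
  unfolding pauli_y_def mat_of_rows_list_def by simp_all

lemma prod2:
  assumes "A \<in> carrier_mat 2 2" "B \<in> carrier_mat 2 2" "i < 2" "j < 2"
  shows "(A * B) $$ (i,j) = A $$ (i,0) * B $$ (0,j) + A $$ (i,1) * B $$ (1,j)"
  using assms by (simp add: scalar_prod_def numeral_2_eq_2)

lemma unitary2:
  assumes A: "A \<in> carrier_mat 2 2"
    and h: "\<And>i j. i < 2 \<Longrightarrow> j < 2 \<Longrightarrow> cnj (A $$ (0,i)) * A $$ (0,j) + cnj (A $$ (1,i)) * A $$ (1,j) = (if i = j then 1 else 0)"
  shows "mat_adjoint A * A = 1\<^sub>m 2"
proof (rule eq_matI)
  fix i j assume "i < dim_row (1\<^sub>m 2 :: complex mat)" "j < dim_col (1\<^sub>m 2 :: complex mat)"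
  then have i: "i < 2" and j: "j < 2" by auto
  have Ad: "mat_adjoint A \<in> carrier_mat 2 2" using A by (auto intro!: carrier_matI)
  have "(mat_adjoint A * A) $$ (i,j) = mat_adjoint A $$ (i,0) * A $$ (0,j) + mat_adjoint A $$ (i,1) * A $$ (1,j)"
    by (rule prod2[OF Ad A i j])
  also have "\<dots> = cnj (A $$ (0,i)) * A $$ (0,j) + cnj (A $$ (1,i)) * A $$ (1,j)"
    using A i by simp
  also have "\<dots> = 1\<^sub>m 2 $$ (i,j)" using h[OF i j] i j by simp
  finally show "(mat_adjoint A * A) $$ (i,j) = 1\<^sub>m 2 $$ (i,j)" .
qed (use A in auto)

lemma pauli_x_unitary: "mat_adjoint pauli_x * pauli_x = 1\<^sub>m 2"
proof (rule unitary2[OF pauli_x_carrier])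
  fix i j :: nat assume "i < 2" "j < 2"
  then have "i = 0 \<or> i = 1" "j = 0 \<or> j = 1" by auto
  then show "cnj (pauli_x $$ (0,i)) * pauli_x $$ (0,j) + cnj (pauli_x $$ (1,i)) * pauli_x $$ (1,j) = (if i = j then 1 else 0)"
    by (elim disjE) (simp_all add: pauli_x_idx)
qed

lemma pauli_y_unitary: "mat_adjoint pauli_y * pauli_y = 1\<^sub>m 2"
proof (rule unitary2[OF pauli_y_carrier])
  fix i j :: nat assume "i < 2" "j < 2"
  then have "i = 0 \<or> i = 1" "j = 0 \<or> j = 1" by auto
  then show "cnj (pauli_y $$ (0,i)) * pauli_y $$ (0,j) + cnj (pauli_y $$ (1,i)) * pauli_y $$ (1,j) = (if i = j then 1 else 0)"
    by (elim disjE) (simp_all add: pauli_y_idx)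
qed

lemma pow_split: "k < N \<Longrightarrow> (2::nat) ^ k * 2 * 2 ^ (N - k - 1) = 2 ^ N"
proof -
  assume "k < N"
  then have "N = k + 1 + (N - k - 1)" by simp
  then have "(2::nat) ^ N = 2 ^ (k + 1 + (N - k - 1))" by simp
  then show ?thesis by (simp add: power_add)
qed

lemma site_op_carrier: "k < N \<Longrightarrow> A \<in> carrier_mat 2 2 \<Longrightarrow> site_op N k A \<in> carrier_mat (2^N) (2^N)"
  unfolding site_op_def using pow_split[of k N] by (auto intro!: carrier_matI)

lemma adjoint_one: "mat_adjoint (1\<^sub>m n) = (1\<^sub>m n :: complex mat)"
  by (rule eq_matI) auto

lemma kron_unitary:
  assumes "A \<in> carrier_mat a a" "B \<in> carrier_mat b b"
    "mat_adjoint A * A = 1\<^sub>m a" "mat_adjoint B * B = 1\<^sub>m b"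
  shows "mat_adjoint (kron A B) * kron A B = 1\<^sub>m (a * b)"
  using assms by (simp add: kron_adjoint kron_mult kron_one)

lemma site_unitary:
  assumes k: "k < N" and A: "A \<in> carrier_mat 2 2" and U: "mat_adjoint A * A = 1\<^sub>m 2"
  shows "mat_adjoint (site_op N k A) * site_op N k A = 1\<^sub>m (2^N)"
proof -
  have "mat_adjoint (site_op N k A) * site_op N k A = 1\<^sub>m (2^k * 2 * 2 ^ (N - k - 1))"
    unfolding site_op_def
    by (intro kron_unitary kron_carrier one_carrier_mat A U) (simp_all add: adjoint_one)
  then show ?thesis using pow_split[OF k] by simp
qed

definition Pk :: "nat \<Rightarrow> complex mat \<Rightarrow> nat \<Rightarrow> complex mat" where
  "Pk N A k = kron (site_op N k A) (1\<^sub>m (2^N))"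

lemma Pk_opb: assumes k: "k < N" and A: "A \<in> carrier_mat 2 2" and U: "mat_adjoint A * A = 1\<^sub>m 2"
  shows "opb (2^N * 2^N) (Pk N A k) 1"
proof (rule unitary_opb)
  show "Pk N A k \<in> carrier_mat (2^N * 2^N) (2^N * 2^N)"
    unfolding Pk_def by (intro kron_carrier site_op_carrier k A one_carrier_mat)
  show "mat_adjoint (Pk N A k) * Pk N A k = 1\<^sub>m (2^N * 2^N)"
    unfolding Pk_def
    by (intro kron_unitary site_op_carrier k A one_carrier_mat site_unitary U) (simp add: adjoint_one)
qed

lemma site_comm_lt:
  assumes kl: "k < l" and lN: "l < N" and A: "A \<in> carrier_mat 2 2" and B: "B \<in> carrier_mat 2 2"
  shows "site_op N k A * site_op N l B = site_op N l B * site_op N k A"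
proof -
  define p where "p = (2::nat)^k"
  define a where "a = (2::nat)^(l-k-1)"
  define q where "q = (2::nat)^(N-l-1)"
  have e1: "(2::nat)^(N-k-1) = a * (2 * q)"
  proof -
    have h: "N - k - 1 = (l - k - 1) + 1 + (N - l - 1)" using kl lN by simp
    have "(2::nat)^(N-k-1) = 2^(l-k-1) * 2^1 * 2^(N-l-1)" by (simp only: h power_add)
    then show ?thesis unfolding a_def q_def by (simp add: mult_ac)
  qed
  have e2: "(2::nat)^l = p * (2 * a)"
  proof -
    have "l = k + 1 + (l - k - 1)" using kl by simp
    then have "(2::nat)^l = 2^(k + 1 + (l - k - 1))" by simp
    then show ?thesis unfolding a_def p_def by (simp add: power_add)
  qed
  have I1: "(1\<^sub>m (a * (2 * q)) :: complex mat) = kron (1\<^sub>m a) (kron (1\<^sub>m 2) (1\<^sub>m q))"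
    by (simp add: kron_one)
  have I2: "(1\<^sub>m (p * (2 * a)) :: complex mat) = kron (1\<^sub>m p) (kron (1\<^sub>m 2) (1\<^sub>m a))"
    by (simp add: kron_one)
  have SA: "site_op N k A = kron (1\<^sub>m p) (kron A (kron (1\<^sub>m a) (kron (1\<^sub>m 2) (1\<^sub>m q))))"
    unfolding site_op_def e1 I1 p_def[symmetric] by (simp add: kron_assoc)
  have SB: "site_op N l B = kron (1\<^sub>m p) (kron (1\<^sub>m 2) (kron (1\<^sub>m a) (kron B (1\<^sub>m q))))"
    unfolding site_op_def e2 I2 q_def[symmetric] by (simp add: kron_assoc)
  have Ad: "dim_row A = 2" "dim_col A = 2" and Bd: "dim_row B = 2" "dim_col B = 2" using A B by auto
  have "site_op N k A * site_op N l B = kron (1\<^sub>m p) (kron A (kron (1\<^sub>m a) (kron B (1\<^sub>m q))))"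
    unfolding SA SB using A B by (simp add: kron_mult Ad Bd)
  moreover have "site_op N l B * site_op N k A = kron (1\<^sub>m p) (kron A (kron (1\<^sub>m a) (kron B (1\<^sub>m q))))"
    unfolding SA SB using A B by (simp add: kron_mult Ad Bd)
  ultimately show ?thesis by simp
qed

lemma site_comm:
  assumes "k \<noteq> l" "k < N" "l < N" "A \<in> carrier_mat 2 2" "B \<in> carrier_mat 2 2"
  shows "site_op N k A * site_op N l B = site_op N l B * site_op N k A"
proof (cases "k < l")
  case True then show ?thesis using site_comm_lt assms by blast
next
  case False then have "l < k" using assms by simp
  then show ?thesis using site_comm_lt assms by metis
qed

lemma Pk_comm:
  assumes "k \<noteq> l" "k < N" "l < N" "A \<in> carrier_mat 2 2" "B \<in> carrier_mat 2 2"
  shows "Pk N A k * Pk N B l = Pk N B l * Pk N A k"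
proof -
  have c: "site_op N k A \<in> carrier_mat (2^N) (2^N)" "site_op N l B \<in> carrier_mat (2^N) (2^N)"
    using assms site_op_carrier by auto
  have "Pk N A k * Pk N B l = kron (site_op N k A * site_op N l B) (1\<^sub>m (2^N) * 1\<^sub>m (2^N))"
    unfolding Pk_def using c by (intro kron_mult) auto
  also have "\<dots> = kron (site_op N l B * site_op N k A) (1\<^sub>m (2^N) * 1\<^sub>m (2^N))"
    using site_comm[OF assms] by simp
  also have "\<dots> = Pk N B l * Pk N A k"
    unfolding Pk_def using c by (intro kron_mult[symmetric]) auto
  finally show ?thesis .
qed

lemma spin_op_carrier: "spin_op N A \<in> carrier_mat (2^N) (2^N)"
  unfolding spin_op_def by simp

lemma kron_spin:
  assumes A: "A \<in> carrier_mat 2 2"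
  shows "kron (spin_op N A) (1\<^sub>m (2^N)) = (1/2 :: complex) \<cdot>\<^sub>m msum (2^N * 2^N) N (Pk N A)"
proof (rule eq_matI)
  fix i j assume i: "i < dim_row ((1/2 :: complex) \<cdot>\<^sub>m msum (2^N * 2^N) N (Pk N A))"
    and j: "j < dim_col ((1/2 :: complex) \<cdot>\<^sub>m msum (2^N * 2^N) N (Pk N A))"
  then have i: "i < 2^N * 2^N" and j: "j < 2^N * 2^N" by auto
  note ii = div_mod_lt[OF i] and jj = div_mod_lt[OF j]
  have c: "\<And>k. k < N \<Longrightarrow> site_op N k A \<in> carrier_mat (2^N) (2^N)" using A site_op_carrier by auto
  have "kron (spin_op N A) (1\<^sub>m (2^N)) $$ (i,j) = spin_op N A $$ (i div 2^N, j div 2^N) * 1\<^sub>m (2^N) $$ (i mod 2^N, j mod 2^N)"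
    using i j by (simp add: spin_op_def)
  also have "\<dots> = (1/2) * (\<Sum>k<N. site_op N k A $$ (i div 2^N, j div 2^N) * 1\<^sub>m (2^N) $$ (i mod 2^N, j mod 2^N))"
    using ii jj by (simp add: spin_op_def sum_distrib_right)
  also have "\<dots> = (1/2) * (\<Sum>k<N. Pk N A k $$ (i,j))"
  proof -
    have "\<And>k. k < N \<Longrightarrow> Pk N A k $$ (i,j) = site_op N k A $$ (i div 2^N, j div 2^N) * 1\<^sub>m (2^N) $$ (i mod 2^N, j mod 2^N)"
    proof -
      fix k assume k: "k < N"
      have d: "dim_row (site_op N k A) = 2^N" "dim_col (site_op N k A) = 2^N" using c[OF k] by auto
      show "Pk N A k $$ (i,j) = site_op N k A $$ (i div 2^N, j div 2^N) * 1\<^sub>m (2^N) $$ (i mod 2^N, j mod 2^N)"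
        unfolding Pk_def using i j d by (subst index_kron) simp_all
    qed
    then show ?thesis by simp
  qed
  also have "\<dots> = ((1/2 :: complex) \<cdot>\<^sub>m msum (2^N * 2^N) N (Pk N A)) $$ (i,j)"
    using i j by simp
  finally show "kron (spin_op N A) (1\<^sub>m (2^N)) $$ (i,j) = ((1/2 :: complex) \<cdot>\<^sub>m msum (2^N * 2^N) N (Pk N A)) $$ (i,j)" .
qed (auto simp: spin_op_def)





lemma spins_inst: "spins (2^N * 2^N) N (Pk N pauli_x) (Pk N pauli_y)"
proof
  fix k assume "k < N"
  then show "opb (2^N * 2^N) (Pk N pauli_x k) 1" "opb (2^N * 2^N) (Pk N pauli_y k) 1"
    by (simp_all add: Pk_opb pauli_x_carrier pauli_y_carrier pauli_x_unitary pauli_y_unitary)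
next
  fix k l assume "k < N" "l < N" "k \<noteq> l"
  then show "Pk N pauli_x k * Pk N pauli_y l = Pk N pauli_y l * Pk N pauli_x k"
    by (intro Pk_comm) (auto simp: pauli_x_carrier pauli_y_carrier)
qed

lemma E_facts:
  assumes c: "c > 0" and N: "N \<ge> 1"
  shows "opb (2^N * 2^N) (Eplus c N) (1/c)" "opb (2^N * 2^N) (Eminus c N) (1/c)"
    "opb (2^N * 2^N) (Eplus c N * Eminus c N - Eminus c N * Eplus c N) (1 / (c^2 * real N))"
proof -
  interpret S: spins "2^N * 2^N" N "Pk N pauli_x" "Pk N pauli_y" by (rule spins_inst)
  define s where "s = 1 / (c * real N)"
  have s0: "0 \<le> s" unfolding s_def using c by simp
  have sN: "s * real N = 1 / c" unfolding s_def using N by simp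
  have s2N: "s^2 * real N = 1 / (c^2 * real N)" unfolding s_def using N by (simp add: power2_eq_square)
  have Sxc: "Sx N \<in> carrier_mat (2^N) (2^N)" and Syc: "Sy N \<in> carrier_mat (2^N) (2^N)"
    unfolding Sx_def Sy_def by (simp_all add: spin_op_carrier)
  have kx: "kron (Sx N) (1\<^sub>m (2^N)) = S.X" unfolding S.X_def Sx_def by (rule kron_spin[OF pauli_x_carrier])
  have ky: "kron (Sy N) (1\<^sub>m (2^N)) = S.Y" unfolding S.Y_def Sy_def by (rule kron_spin[OF pauli_y_carrier])
  have Ep: "Eplus c N = S.Ep s"
  proof -
    have "kron (Splus N) (1\<^sub>m (2^N)) = kron (Sx N) (1\<^sub>m (2^N)) + kron (\<i> \<cdot>\<^sub>m Sy N) (1\<^sub>m (2^N))"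
      unfolding Splus_def using Sxc Syc by (intro kron_add_left) auto
    also have "\<dots> = S.X + \<i> \<cdot>\<^sub>m S.Y" by (simp add: kron_smult_left kx ky)
    finally show ?thesis unfolding Eplus_def S.Ep_def s_def by simp
  qed
  have Em: "Eminus c N = S.Em s"
  proof -
    have "kron (Sminus N) (1\<^sub>m (2^N)) = kron (Sx N) (1\<^sub>m (2^N)) - kron (\<i> \<cdot>\<^sub>m Sy N) (1\<^sub>m (2^N))"
      unfolding Sminus_def using Sxc Syc by (intro kron_minus_left) auto
    also have "\<dots> = S.X - \<i> \<cdot>\<^sub>m S.Y" by (simp add: kron_smult_left kx ky)
    finally show ?thesis unfolding Eminus_def S.Em_def s_def by simp
  qed
  show "opb (2^N * 2^N) (Eplus c N) (1/c)" using S.opbEp[OF s0] unfolding Ep sN .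
  show "opb (2^N * 2^N) (Eminus c N) (1/c)" using S.opbEm[OF s0] unfolding Em sN .
  show "opb (2^N * 2^N) (Eplus c N * Eminus c N - Eminus c N * Eplus c N) (1 / (c^2 * real N))"
    using S.opb_comm[of s] unfolding Ep Em s2N .
qed



lemma vkron_dim [simp]: "dim_vec (vkron v w) = dim_vec v * dim_vec w"
  unfolding vkron_def by simp

lemma vkron_inner:
  assumes v: "v \<in> carrier_vec n" "v' \<in> carrier_vec n" and u: "u \<in> carrier_vec m" "u' \<in> carrier_vec m"
  shows "vkron v u \<bullet>c vkron v' u' = (v \<bullet>c v') * (u \<bullet>c u')"
proof -
  have "vkron v u \<bullet>c vkron v' u' = (\<Sum>i<n*m. (v $ (i div m) * u $ (i mod m)) * cnj (v' $ (i div m) * u' $ (i mod m)))"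
    using v u by (simp add: scalar_prod_def lessThan_atLeast0 vkron_def)
  also have "\<dots> = (\<Sum>a<n. \<Sum>b<m. (v $ a * u $ b) * cnj (v' $ a * u' $ b))"
    unfolding sum_split_prod by (intro sum.cong refl) simp
  also have "\<dots> = (\<Sum>a<n. \<Sum>b<m. (v $ a * cnj (v' $ a)) * (u $ b * cnj (u' $ b)))"
    by (intro sum.cong refl) (simp add: mult_ac)
  also have "\<dots> = (\<Sum>a<n. v $ a * cnj (v' $ a)) * (\<Sum>b<m. u $ b * cnj (u' $ b))"
    by (rule sum_product[symmetric])
  also have "\<dots> = (v \<bullet>c v') * (u \<bullet>c u')"
    using v u by (simp add: scalar_prod_def lessThan_atLeast0)
  finally show ?thesis .
qed

lemma gibbs_sum: "(\<Sum>a<2^N. gibbs_weight \<beta> N lam a) = 1"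
proof -
  have pos: "0 < (\<Sum>b<(2::nat)^N. exp (- \<beta> * lam b))"
    by (rule sum_pos) (simp_all add: lessThan_empty_iff)
  show ?thesis unfolding gibbs_weight_def using pos by (simp add: sum_divide_distrib[symmetric])
qed

lemma gibbs_nonneg: "0 \<le> gibbs_weight \<beta> N lam a"
  unfolding gibbs_weight_def by (intro divide_nonneg_nonneg sum_nonneg) auto

lemma purif_carrier: "purif \<beta> N lam e \<in> carrier_vec (4^N)"
  unfolding purif_def by simp

lemma purif_norm:
  assumes e_dim: "\<And>a. a < 2^N \<Longrightarrow> e a \<in> carrier_vec (2^N)"
    and orth: "\<And>a b. a < 2^N \<Longrightarrow> b < 2^N \<Longrightarrow> e a \<bullet>c e b = (if a = b then 1 else 0)"
  shows "vn (purif \<beta> N lam e) = 1"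
proof -
  define D where "D = (2::nat)^N * 2^N"
  have D4: "(4::nat)^N = D" unfolding D_def by (simp flip: power_mult_distrib)
  define w where "w a = complex_of_real (sqrt (gibbs_weight \<beta> N lam a))" for a
  define U where "U a = vkron (e a) (e a)" for a
  have Uc: "\<And>a. a < 2^N \<Longrightarrow> U a \<in> carrier_vec D"
  proof -
    fix a :: nat assume a: "a < 2^N"
    show "U a \<in> carrier_vec D" unfolding U_def D_def by (rule carrier_vecI) (use e_dim[OF a] in auto)
  qed
  have UU: "\<And>a b. a < 2^N \<Longrightarrow> b < 2^N \<Longrightarrow> U a \<bullet>c U b = (if a = b then 1 else 0)"
  proof -
    fix a b :: nat assume a: "a < 2^N" and b: "b < 2^N"
    have "U a \<bullet>c U b = (e a \<bullet>c e b) * (e a \<bullet>c e b)"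
      unfolding U_def by (rule vkron_inner[OF e_dim[OF a] e_dim[OF b] e_dim[OF a] e_dim[OF b]])
    then show "U a \<bullet>c U b = (if a = b then 1 else 0)" using orth[OF a b] by simp
  qed
  let ?O = "purif \<beta> N lam e"
  have Oi: "\<And>i. i < D \<Longrightarrow> ?O $ i = (\<Sum>a<2^N. w a * U a $ i)"
    unfolding purif_def w_def U_def D4 by simp
  have "?O \<bullet>c ?O = (\<Sum>i<D. ?O $ i * cnj (?O $ i))"
    by (simp add: scalar_prod_def lessThan_atLeast0 purif_def D4)
  also have "\<dots> = (\<Sum>i<D. \<Sum>a<2^N. \<Sum>b<2^N. w a * cnj (w b) * (U a $ i * cnj (U b $ i)))"
    by (intro sum.cong refl) (simp add: Oi sum_product mult_ac)
  also have "\<dots> = (\<Sum>a<2^N. \<Sum>i<D. \<Sum>b<2^N. w a * cnj (w b) * (U a $ i * cnj (U b $ i)))"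
    by (rule sum.swap)
  also have "\<dots> = (\<Sum>a<2^N. \<Sum>b<2^N. \<Sum>i<D. w a * cnj (w b) * (U a $ i * cnj (U b $ i)))"
    by (intro sum.cong refl sum.swap)
  also have "\<dots> = (\<Sum>a<2^N. \<Sum>b<2^N. w a * cnj (w b) * (U a \<bullet>c U b))"
  proof (intro sum.cong refl)
    fix a b :: nat assume a: "a \<in> {..<2^N}" and b: "b \<in> {..<2^N}"
    have "U a \<bullet>c U b = (\<Sum>i<D. U a $ i * cnj (U b $ i))"
      using Uc[of b] a b by (simp add: scalar_prod_def lessThan_atLeast0)
    then show "(\<Sum>i<D. w a * cnj (w b) * (U a $ i * cnj (U b $ i))) = w a * cnj (w b) * (U a \<bullet>c U b)"
      by (simp add: sum_distrib_left)
  qed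
  also have "\<dots> = (\<Sum>a<2^N. w a * cnj (w a))"
  proof (intro sum.cong refl)
    fix a :: nat assume a: "a \<in> {..<2^N}"
    show "(\<Sum>b<2^N. w a * cnj (w b) * (U a \<bullet>c U b)) = w a * cnj (w a)"
      by (subst sum_single[of _ a]) (use a UU in auto)
  qed
  also have "\<dots> = (\<Sum>a<2^N. complex_of_real (gibbs_weight \<beta> N lam a))"
    by (intro sum.cong refl) (simp add: w_def gibbs_nonneg flip: of_real_mult)
  also have "\<dots> = 1" by (simp flip: of_real_sum add: gibbs_sum)
  finally have "?O \<bullet>c ?O = 1" .
  then have "complex_of_real ((vn ?O)^2) = 1" by (simp add: cinner_self)
  then have "(vn ?O)^2 = 1" by (simp only: of_real_eq_1_iff)
  then show ?thesis using vn_nonneg[of ?O] by (auto simp: power2_eq_1_iff)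
qed


lemma null_comp:
  fixes f :: "nat \<Rightarrow> complex"
  assumes "eventually (\<lambda>N. cmod (f N) \<le> g N) sequentially" "g \<longlonglongrightarrow> 0"
  shows "f \<longlonglongrightarrow> 0"
proof -
  have "(\<lambda>N. cmod (f N)) \<longlonglongrightarrow> 0"
    by (rule tendsto_sandwich[OF _ assms(1) tendsto_const assms(2)]) simp
  then show ?thesis by (simp add: tendsto_norm_zero_iff)
qed

lemma expect_bound:
  assumes O: "\<Omega> \<in> carrier_vec d" and n: "vn \<Omega> = 1" and M: "opb d M K"
  shows "cmod (expect \<Omega> M) \<le> K"
proof -
  have Mc: "M \<in> carrier_mat d d" using M by (rule opbD)
  have "cmod (expect \<Omega> M) \<le> vn (M *\<^sub>v \<Omega>) * vn \<Omega>"
    unfolding expect_def using O Mc by (intro vn_cs) auto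
  also have "\<dots> \<le> K" using opbD(3)[OF M O] n by simp
  finally show ?thesis .
qed

lemma expect_diff:
  assumes O: "\<Omega> \<in> carrier_vec d" and A: "A \<in> carrier_mat d d" and B: "B \<in> carrier_mat d d"
  shows "expect \<Omega> A - expect \<Omega> B = expect \<Omega> (A - B)"
proof -
  have "(A - B) *\<^sub>v \<Omega> = A *\<^sub>v \<Omega> - B *\<^sub>v \<Omega>" using A B O by (simp add: minus_mult_distrib_mat_vec)
  then show ?thesis unfolding expect_def using A B O
    by (simp add: minus_scalar_prod_distrib[of _ d])
qed

lemma four_pow: "(4::nat)^N = 2^N * 2^N"
  by (simp flip: power_mult_distrib)

theorem corollary1:
  fixes eps Tc \<beta> c :: real
    and e :: "nat \<Rightarrow> nat \<Rightarrow> complex vec"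
    and lam :: "nat \<Rightarrow> nat \<Rightarrow> real"
  assumes Tc_pos: "Tc > 0" and beta_pos: "\<beta> > 0"
    and e_dim: "\<And>N a. N \<ge> 1 \<Longrightarrow> a < 2^N \<Longrightarrow> e N a \<in> carrier_vec (2^N)"
    and e_orthonormal: "\<And>N a b. N \<ge> 1 \<Longrightarrow> a < 2^N \<Longrightarrow> b < 2^N \<Longrightarrow>
          e N a \<bullet>c e N b = (if a = b then 1 else 0)"
    and e_eig_H: "\<And>N a. N \<ge> 1 \<Longrightarrow> a < 2^N \<Longrightarrow>
          ham eps Tc N *\<^sub>v e N a = complex_of_real (lam N a) \<cdot>\<^sub>v e N a"
    and e_eig_Ssq: "\<And>N a. N \<ge> 1 \<Longrightarrow> a < 2^N \<Longrightarrow>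
          \<exists>\<mu>. Ssq N *\<^sub>v e N a = \<mu> \<cdot>\<^sub>v e N a"
    and e_eig_Sz: "\<And>N a. N \<ge> 1 \<Longrightarrow> a < 2^N \<Longrightarrow>
          \<exists>\<mu>. Sz N *\<^sub>v e N a = \<mu> \<cdot>\<^sub>v e N a"
    and c_lim: "(\<lambda>N. sqrt (Re (mtrace (gibbs_state \<beta> N (lam N) (e N) * Splus N * Sminus N))
                        / (real N)^2)) \<longlonglongrightarrow> c"
    and c_pos: "c > 0"
  shows
    "(\<forall>ps :: (nat \<times> nat) list.
        (\<lambda>N. expect (purif \<beta> N (lam N) (e N)) (word_op c N ps)
            - expect (purif \<beta> N (lam N) (e N))
                ((Eminus c N ^\<^sub>m sum_list (map fst ps)) * (Eplus c N ^\<^sub>m sum_list (map snd ps))))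
        \<longlonglongrightarrow> 0)
     \<and>
     (\<forall>X :: nat \<Rightarrow> complex mat.
        (\<forall>N. X N \<in> carrier_mat (4^N) (4^N)) \<longrightarrow>
        (\<lambda>N. expect (purif \<beta> N (lam N) (e N)) (mat_adjoint (X N) * X N)) \<longlonglongrightarrow> 0 \<longrightarrow>
        (\<forall>n m :: nat.
           (\<lambda>N. expect (purif \<beta> N (lam N) (e N))
                  ((Eminus c N ^\<^sub>m n) * (Eplus c N ^\<^sub>m m) * X N)) \<longlonglongrightarrow> 0))"

proof -
  define \<Omega> where "\<Omega> N = purif \<beta> N (lam N) (e N)" for N
  define K where "K = max 1 (1/c)"
  have K1: "1 \<le> K" and Kc: "1/c \<le> K" unfolding K_def by auto
  have Oc: "\<And>N. \<Omega> N \<in> carrier_vec (2^N * 2^N)" unfolding \<Omega>_def using purif_carrier four_pow by metis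
  have On: "\<And>N. N \<ge> 1 \<Longrightarrow> vn (\<Omega> N) = 1" unfolding \<Omega>_def
    by (rule purif_norm) (use e_dim e_orthonormal in auto)
  have Ep: "\<And>N. N \<ge> 1 \<Longrightarrow> opb (2^N * 2^N) (Eplus c N) K"
    using E_facts(1)[OF c_pos] Kc opb_mono by blast
  have Em: "\<And>N. N \<ge> 1 \<Longrightarrow> opb (2^N * 2^N) (Eminus c N) K"
    using E_facts(2)[OF c_pos] Kc opb_mono by blast
  have Cm: "\<And>N. N \<ge> 1 \<Longrightarrow> opb (2^N * 2^N) (Eplus c N * Eminus c N - Eminus c N * Eplus c N) (1 / (c^2 * real N))"
    using E_facts(3)[OF c_pos] by blast
  have inv: "(\<lambda>N. 1 / real N) \<longlonglongrightarrow> 0" by (rule lim_1_over_n)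
  have part1: "\<forall>ps :: (nat \<times> nat) list.
        (\<lambda>N. expect (purif \<beta> N (lam N) (e N)) (word_op c N ps)
            - expect (purif \<beta> N (lam N) (e N))
                ((Eminus c N ^\<^sub>m sum_list (map fst ps)) * (Eplus c N ^\<^sub>m sum_list (map snd ps))))
        \<longlonglongrightarrow> 0"
  proof
    fix ps :: "(nat \<times> nat) list"
    have b: "cmod (expect (\<Omega> N) (word_op c N ps)
            - expect (\<Omega> N) ((Eminus c N ^\<^sub>m sum_list (map fst ps)) * (Eplus c N ^\<^sub>m sum_list (map snd ps))))
          \<le> Cw K ps / c^2 * (1 / real N)" if N: "N \<ge> 1" for N
    proof -
      interpret R: reord "2^N * 2^N" "Eminus c N" "Eplus c N" K "1 / (c^2 * real N)"
        using Ep[OF N] Em[OF N] K1 Cm[OF N] by unfold_locales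
      have w: "word_op c N ps = wd (Eminus c N) (Eplus c N) (2^N * 2^N) ps"
        unfolding word_op_def wd_def four_pow ..
      have "expect (\<Omega> N) (word_op c N ps)
            - expect (\<Omega> N) ((Eminus c N ^\<^sub>m sum_list (map fst ps)) * (Eplus c N ^\<^sub>m sum_list (map snd ps)))
          = expect (\<Omega> N) (wd (Eminus c N) (Eplus c N) (2^N * 2^N) ps
             - (Eminus c N ^\<^sub>m sum_list (map fst ps)) * (Eplus c N ^\<^sub>m sum_list (map snd ps)))"
        unfolding w using Oc R.wd_carrier R.Ac R.Bc by (intro expect_diff) auto
      also have "cmod \<dots> \<le> Cw K ps * (1 / (c^2 * real N))"
        by (rule expect_bound[OF Oc On[OF N] R.reorder])
      finally show ?thesis by simp
    qed
    have "(\<lambda>N. Cw K ps / c^2 * (1 / real N)) \<longlonglongrightarrow> 0"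
      using tendsto_mult[OF tendsto_const inv, of "Cw K ps / c^2"] by simp
    then show "(\<lambda>N. expect (purif \<beta> N (lam N) (e N)) (word_op c N ps)
            - expect (purif \<beta> N (lam N) (e N))
                ((Eminus c N ^\<^sub>m sum_list (map fst ps)) * (Eplus c N ^\<^sub>m sum_list (map snd ps))))
        \<longlonglongrightarrow> 0"
      unfolding \<Omega>_def[symmetric]
      by (intro null_comp[where g = "\<lambda>N. Cw K ps / c^2 * (1 / real N)"])
         (use b in \<open>auto simp: eventually_sequentially\<close>)
  qed
  have part2: "\<forall>X :: nat \<Rightarrow> complex mat.
        (\<forall>N. X N \<in> carrier_mat (4^N) (4^N)) \<longrightarrow>
        (\<lambda>N. expect (purif \<beta> N (lam N) (e N)) (mat_adjoint (X N) * X N)) \<longlonglongrightarrow> 0 \<longrightarrow>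
        (\<forall>n m :: nat.
           (\<lambda>N. expect (purif \<beta> N (lam N) (e N))
                  ((Eminus c N ^\<^sub>m n) * (Eplus c N ^\<^sub>m m) * X N)) \<longlonglongrightarrow> 0)"
  proof (intro allI impI)
    fix X :: "nat \<Rightarrow> complex mat" and n m :: nat
    assume Xc: "\<forall>N. X N \<in> carrier_mat (4^N) (4^N)"
      and lim: "(\<lambda>N. expect (purif \<beta> N (lam N) (e N)) (mat_adjoint (X N) * X N)) \<longlonglongrightarrow> 0"
    have Xc': "\<And>N. X N \<in> carrier_mat (2^N * 2^N) (2^N * 2^N)" using Xc four_pow by metis
    have XO: "\<And>N. X N *\<^sub>v \<Omega> N \<in> carrier_vec (2^N * 2^N)" by (rule mult_mat_vec_carrier[OF Xc' Oc])
    have eq: "expect (\<Omega> N) (mat_adjoint (X N) * X N) = complex_of_real ((vn (X N *\<^sub>v \<Omega> N))^2)" for N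
    proof -
      have Ad: "mat_adjoint (X N) \<in> carrier_mat (2^N * 2^N) (2^N * 2^N)"
        using Xc'[of N] by (auto intro!: carrier_matI)
      have "(mat_adjoint (X N) * X N) *\<^sub>v \<Omega> N = mat_adjoint (X N) *\<^sub>v (X N *\<^sub>v \<Omega> N)"
        using Ad Xc'[of N] Oc[of N] by (rule assoc_mult_mat_vec)
      then have "expect (\<Omega> N) (mat_adjoint (X N) * X N) = (X N *\<^sub>v \<Omega> N) \<bullet>c (X N *\<^sub>v \<Omega> N)"
        unfolding expect_def using adjoint_inner[OF Xc'[of N] XO[of N] Oc[of N]] by simp
      then show ?thesis by (simp add: cinner_self)
    qed
    have l2: "(\<lambda>N. (vn (X N *\<^sub>v \<Omega> N))^2) \<longlonglongrightarrow> 0"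
    proof -
      have "(\<lambda>N. complex_of_real ((vn (X N *\<^sub>v \<Omega> N))^2)) \<longlonglongrightarrow> 0"
        using lim unfolding \<Omega>_def[symmetric] eq .
      then have "(\<lambda>N. cmod (complex_of_real ((vn (X N *\<^sub>v \<Omega> N))^2))) \<longlonglongrightarrow> 0"
        by (simp only: tendsto_norm_zero_iff)
      then show ?thesis by (simp only: norm_of_real abs_power2)
    qed
    have l1: "(\<lambda>N. vn (X N *\<^sub>v \<Omega> N)) \<longlonglongrightarrow> 0"
      using tendsto_real_sqrt[OF l2] by simp
    have b: "cmod (expect (\<Omega> N) ((Eminus c N ^\<^sub>m n) * (Eplus c N ^\<^sub>m m) * X N))
        \<le> K ^ n * K ^ m * vn (X N *\<^sub>v \<Omega> N)" if N: "N \<ge> 1" for N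
    proof -
      have P: "opb (2^N * 2^N) ((Eminus c N ^\<^sub>m n) * (Eplus c N ^\<^sub>m m)) (K ^ n * K ^ m)"
        by (rule opb_mult[OF opb_pow[OF Em[OF N]] opb_pow[OF Ep[OF N]]])
      have Pc: "(Eminus c N ^\<^sub>m n) * (Eplus c N ^\<^sub>m m) \<in> carrier_mat (2^N * 2^N) (2^N * 2^N)"
        using P by (rule opbD)
      have e1: "((Eminus c N ^\<^sub>m n) * (Eplus c N ^\<^sub>m m) * X N) *\<^sub>v \<Omega> N
          = ((Eminus c N ^\<^sub>m n) * (Eplus c N ^\<^sub>m m)) *\<^sub>v (X N *\<^sub>v \<Omega> N)"
        using Pc Xc'[of N] Oc[of N] by (rule assoc_mult_mat_vec)
      have "cmod (expect (\<Omega> N) ((Eminus c N ^\<^sub>m n) * (Eplus c N ^\<^sub>m m) * X N))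
          \<le> vn (((Eminus c N ^\<^sub>m n) * (Eplus c N ^\<^sub>m m) * X N) *\<^sub>v \<Omega> N) * vn (\<Omega> N)"
        unfolding expect_def using Pc Xc'[of N] Oc[of N] by (intro vn_cs) auto
      also have "\<dots> = vn (((Eminus c N ^\<^sub>m n) * (Eplus c N ^\<^sub>m m)) *\<^sub>v (X N *\<^sub>v \<Omega> N))"
        unfolding e1 On[OF N] by simp
      also have "\<dots> \<le> K ^ n * K ^ m * vn (X N *\<^sub>v \<Omega> N)"
        by (rule opbD(3)[OF P XO])
      finally show ?thesis .
    qed
    have "(\<lambda>N. K ^ n * K ^ m * vn (X N *\<^sub>v \<Omega> N)) \<longlonglongrightarrow> 0"
      using tendsto_mult[OF tendsto_const l1, of "K ^ n * K ^ m"] by simp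
    then show "(\<lambda>N. expect (purif \<beta> N (lam N) (e N))
                  ((Eminus c N ^\<^sub>m n) * (Eplus c N ^\<^sub>m m) * X N)) \<longlonglongrightarrow> 0"
      unfolding \<Omega>_def[symmetric]
      by (intro null_comp[where g = "\<lambda>N. K ^ n * K ^ m * vn (X N *\<^sub>v \<Omega> N)"])
         (use b in \<open>auto simp: eventually_sequentially\<close>)
  qed
  show ?thesis using part1 part2 by blast
qed


end
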